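(* Let $\mathbb{F}$ be an algebraically closed field of characteristic different from $2$. There is no non-abelian nilpotent Lie algebra $L$ of finite dimension $n$ over $\mathbb{F}$ with $s(L)=5$ such that either (i) $\dim L^{2}\ge 4$, or (ii) $\dim L^{2}=1$.
   Context: Schur multiplier: if $L\cong F/R$ with $F$ a free Lie algebra, then $\mathcal{M}(L)\cong (R\cap F^{2})/[R,F]$. For a non-abelian nilpotent Lie algebra $L$ of dimension $n$, the integer $s(L)\ge 0$ is defined by $\dim\mathcal{M}(L)=\frac12(n-1)(n-2)+1-s(L)$. $L^2=[L,L]$. *)

theory Defs
  imports Main "HOL-Computational_Algebra.Polynomial"
begin

definition alg_closed_field :: "'f::field itself \<Rightarrow> bool" where
  "alg_closed_field _ \<longleftrightarrow> (\<forall>p::'f poly. degree p > 0 \<longrightarrow> (\<exists>x. poly p x = 0))"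

definition lie_algebra ::
  "('f::field \<Rightarrow> 'v::ab_group_add \<Rightarrow> 'v) \<Rightarrow> ('v \<Rightarrow> 'v \<Rightarrow> 'v) \<Rightarrow> bool" where
  "lie_algebra scale br \<longleftrightarrow> vector_space scale \<and>
     (\<forall>x y z. br (x + y) z = br x z + br y z) \<and>
     (\<forall>x y z. br x (y + z) = br x y + br x z) \<and>
     (\<forall>a x y. br (scale a x) y = scale a (br x y)) \<and>
     (\<forall>a x y. br x (scale a y) = scale a (br x y)) \<and>
     (\<forall>x. br x x = 0) \<and>
     (\<forall>x y z. br x (br y z) + br y (br z x) + br z (br x y) = 0)"

definition finite_dim ::
  "('f::field \<Rightarrow> 'v::ab_group_add \<Rightarrow> 'v) \<Rightarrow> bool" where
  "finite_dim scale \<longleftrightarrow> (\<exists>B. finite B \<and> module.span scale B = UNIV)"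

fun lcs :: "('f::field \<Rightarrow> 'v::ab_group_add \<Rightarrow> 'v) \<Rightarrow> ('v \<Rightarrow> 'v \<Rightarrow> 'v) \<Rightarrow> nat \<Rightarrow> 'v set" where
  "lcs scale br 0 = UNIV"
| "lcs scale br (Suc 0) = UNIV"
| "lcs scale br (Suc (Suc k)) =
     module.span scale {br x y | x y. y \<in> lcs scale br (Suc k)}"

definition derived :: "('f::field \<Rightarrow> 'v::ab_group_add \<Rightarrow> 'v) \<Rightarrow> ('v \<Rightarrow> 'v \<Rightarrow> 'v) \<Rightarrow> 'v set" where
  "derived scale br = module.span scale {br x y | x y. True}"

definition nilpotent_lie :: "('f::field \<Rightarrow> 'v::ab_group_add \<Rightarrow> 'v) \<Rightarrow> ('v \<Rightarrow> 'v \<Rightarrow> 'v) \<Rightarrow> bool" where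
  "nilpotent_lie scale br \<longleftrightarrow> (\<exists>k. lcs scale br k = {0})"

definition abelian_lie :: "('v::ab_group_add \<Rightarrow> 'v \<Rightarrow> 'v) \<Rightarrow> bool" where
  "abelian_lie br \<longleftrightarrow> (\<forall>x y. br x y = 0)"

text \<open>Free (non-associative) magma algebra A(X) on X = the underlying set of L:
  finitely supported functions on bracket terms.  The free Lie algebra F on X is
  A(X)/I, where I is the two-sided ideal generated by all a*a and all Jacobi
  expressions.  The canonical epimorphism F \<rightarrow> L sends the generator x to x.
  Pulling the Hopf formula (R \<inter> F^2)/[R,F] back to A(X) gives
  (K \<inter> A^2)/([K,A] + I), where K is the kernel of the evaluation A(X) \<rightarrow> L
  (note preimage of F^2 is A^2 since I \<subseteq> A^2, and the preimage of R is K).\<close>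

datatype 'x tm = Gen 'x | Br "'x tm" "'x tm"

type_synonym ('x, 'f) fa = "'x tm \<Rightarrow> 'f"

definition FA :: "('x, 'f::field) fa set" where
  "FA = {c. finite {t. c t \<noteq> 0}}"

definition fa_add :: "('x, 'f::field) fa \<Rightarrow> ('x, 'f) fa \<Rightarrow> ('x, 'f) fa" where
  "fa_add c d = (\<lambda>t. c t + d t)"

definition fa_scale :: "'f::field \<Rightarrow> ('x, 'f) fa \<Rightarrow> ('x, 'f) fa" where
  "fa_scale a c = (\<lambda>t. a * c t)"

definition fa_zero :: "('x, 'f::field) fa" where
  "fa_zero = (\<lambda>t. 0)"

definition fa_mult :: "('x, 'f::field) fa \<Rightarrow> ('x, 'f) fa \<Rightarrow> ('x, 'f) fa" where
  "fa_mult c d = (\<lambda>t. case t of Gen _ \<Rightarrow> 0 | Br s u \<Rightarrow> c s * d u)"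

definition fa_span :: "('x, 'f::field) fa set \<Rightarrow> ('x, 'f) fa set" where
  "fa_span S = {v. \<exists>T c. finite T \<and> T \<subseteq> S \<and> v = (\<lambda>t. \<Sum>s\<in>T. c s * s t)}"

definition fa_sq :: "('x, 'f::field) fa set" where
  "fa_sq = fa_span {fa_mult a b | a b. a \<in> FA \<and> b \<in> FA}"

inductive_set lie_rel_ideal :: "('x, 'f::field) fa set" where
  alt: "a \<in> FA \<Longrightarrow> fa_mult a a \<in> lie_rel_ideal"
| jac: "a \<in> FA \<Longrightarrow> b \<in> FA \<Longrightarrow> c \<in> FA \<Longrightarrow>
     fa_add (fa_add (fa_mult a (fa_mult b c)) (fa_mult b (fa_mult c a))) (fa_mult c (fa_mult a b))
       \<in> lie_rel_ideal"
| zero: "fa_zero \<in> lie_rel_ideal"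
| add: "u \<in> lie_rel_ideal \<Longrightarrow> v \<in> lie_rel_ideal \<Longrightarrow> fa_add u v \<in> lie_rel_ideal"
| smult: "u \<in> lie_rel_ideal \<Longrightarrow> fa_scale r u \<in> lie_rel_ideal"
| multl: "u \<in> lie_rel_ideal \<Longrightarrow> a \<in> FA \<Longrightarrow> fa_mult a u \<in> lie_rel_ideal"
| multr: "u \<in> lie_rel_ideal \<Longrightarrow> a \<in> FA \<Longrightarrow> fa_mult u a \<in> lie_rel_ideal"

fun eval_tm :: "('v \<Rightarrow> 'v \<Rightarrow> 'v) \<Rightarrow> 'v tm \<Rightarrow> 'v" where
  "eval_tm br (Gen x) = x"
| "eval_tm br (Br s u) = br (eval_tm br s) (eval_tm br u)"

definition eval_fa ::
  "('f::field \<Rightarrow> 'v::ab_group_add \<Rightarrow> 'v) \<Rightarrow> ('v \<Rightarrow> 'v \<Rightarrow> 'v) \<Rightarrow> ('v, 'f) fa \<Rightarrow> 'v" where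
  "eval_fa scale br c = (\<Sum>t\<in>{t. c t \<noteq> 0}. scale (c t) (eval_tm br t))"

definition pres_kernel ::
  "('f::field \<Rightarrow> 'v::ab_group_add \<Rightarrow> 'v) \<Rightarrow> ('v \<Rightarrow> 'v \<Rightarrow> 'v) \<Rightarrow> ('v, 'f) fa set" where
  "pres_kernel scale br = {c \<in> FA. eval_fa scale br c = 0}"

definition quot_dim :: "('x, 'f::field) fa set \<Rightarrow> ('x, 'f) fa set \<Rightarrow> nat \<Rightarrow> bool" where
  "quot_dim V W d \<longleftrightarrow> (\<exists>S. finite S \<and> card S = d \<and> S \<subseteq> V \<and>
      V \<subseteq> fa_span (S \<union> W) \<and>
      (\<forall>c. (\<lambda>t. \<Sum>s\<in>S. c s * s t) \<in> W \<longrightarrow> (\<forall>s\<in>S. c s = 0)))"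

definition schur_dim ::
  "('f::field \<Rightarrow> 'v::ab_group_add \<Rightarrow> 'v) \<Rightarrow> ('v \<Rightarrow> 'v \<Rightarrow> 'v) \<Rightarrow> nat" where
  "schur_dim scale br =
     (THE d. quot_dim (pres_kernel scale br \<inter> fa_sq)
        (fa_span ({fa_mult r a | r a. r \<in> pres_kernel scale br \<and> a \<in> FA} \<union> lie_rel_ideal)) d)"

definition s_inv ::
  "('f::field \<Rightarrow> 'v::ab_group_add \<Rightarrow> 'v) \<Rightarrow> ('v \<Rightarrow> 'v \<Rightarrow> 'v) \<Rightarrow> int" where
  "s_inv scale br =
     (let n = int (vector_space.dim scale (UNIV :: 'v set))
      in (n - 1) * (n - 2) div 2 + 1 - int (schur_dim scale br))"

end

theory Submission
  imports Defs "HOL-Library.Function_Algebras"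
begin

section \<open>The free magma algebra as a vector space\<close>

interpretation FV: vector_space "fa_scale :: 'f::field \<Rightarrow> ('x,'f) fa \<Rightarrow> ('x,'f) fa"
  by unfold_locales (auto simp: fa_scale_def fun_eq_iff algebra_simps)

lemma sum_fun_app: "(\<Sum>a\<in>T. g a) x = (\<Sum>a\<in>T. g a x)"
  by (induction T rule: infinite_finite_induct) auto

lemma fa_span_eq: "fa_span S = FV.span S"
proof -
  have "FV.span S = {(\<Sum>a\<in>t. fa_scale (r a) a) |t r. finite t \<and> t \<subseteq> S}"
    by (rule FV.span_explicit)
  also have "\<dots> = fa_span S"
    unfolding fa_span_def fa_scale_def
    by (auto simp: fun_eq_iff sum_fun_app)
  finally show ?thesis by simp
qed

lemma fa_add_eq[simp]: "fa_add c d = c + d" by (simp add: fa_add_def fun_eq_iff)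
lemma fa_zero_eq[simp]: "fa_zero = 0" by (simp add: fa_zero_def fun_eq_iff)
lemma fa_scale_app: "fa_scale a c t = a * c t" by (simp add: fa_scale_def)

lemmas fapp = plus_fun_apply zero_fun_apply times_fun_apply one_fun_apply
  uminus_apply minus_apply fa_scale_app
declare plus_fun_apply[simp del] zero_fun_apply[simp del] times_fun_apply[simp del]
  one_fun_apply[simp del] uminus_apply[simp del] minus_apply[simp del]

definition supp :: "('x,'f::field) fa \<Rightarrow> 'x tm set" where "supp c = {t. c t \<noteq> 0}"

lemma FA_iff: "c \<in> FA \<longleftrightarrow> finite (supp c)" by (simp add: FA_def supp_def)

lemma supp_add: "supp (x + y) \<subseteq> supp x \<union> supp y" by (auto simp: supp_def fapp)
lemma supp_scale: "supp (fa_scale a x) \<subseteq> supp x" by (auto simp: supp_def fapp)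

lemma FA_subspace: "FV.subspace (FA :: ('x,'f::field) fa set)"
  unfolding FV.subspace_def
  by (auto simp: FA_iff supp_def[of 0] fapp intro: finite_subset[OF supp_add] finite_subset[OF supp_scale])

lemma FA_0[simp]: "0 \<in> FA" using FV.subspace_0[OF FA_subspace] .
lemma FA_add[simp]: "c \<in> FA \<Longrightarrow> d \<in> FA \<Longrightarrow> c + d \<in> FA" using FV.subspace_add[OF FA_subspace] .
lemma FA_scale[simp]: "c \<in> FA \<Longrightarrow> fa_scale a c \<in> FA" using FV.subspace_scale[OF FA_subspace] .
lemma FA_diff[simp]: "c \<in> FA \<Longrightarrow> d \<in> FA \<Longrightarrow> c - d \<in> FA" using FV.subspace_diff[OF FA_subspace] .
lemma FA_uminus[simp]: "c \<in> FA \<Longrightarrow> - c \<in> FA" using FV.subspace_neg[OF FA_subspace] .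
lemma FA_sum: "(\<And>i. i \<in> A \<Longrightarrow> g i \<in> FA) \<Longrightarrow> sum g A \<in> FA"
  using FV.subspace_sum[OF FA_subspace] by blast
lemma FA_span: "S \<subseteq> FA \<Longrightarrow> FV.span S \<subseteq> FA"
  using FV.span_minimal FA_subspace by blast

section \<open>The product\<close>

lemma fa_mult_app_Br[simp]: "fa_mult c d (Br s u) = c s * d u" by (simp add: fa_mult_def)
lemma fa_mult_app_Gen[simp]: "fa_mult c d (Gen x) = 0" by (simp add: fa_mult_def)

lemma fa_mult_add_l: "fa_mult (c + d) e = fa_mult c e + fa_mult d e"
  by (auto simp: fa_mult_def fun_eq_iff algebra_simps fapp split: tm.split)
lemma fa_mult_add_r: "fa_mult e (c + d) = fa_mult e c + fa_mult e d"
  by (auto simp: fa_mult_def fun_eq_iff algebra_simps fapp split: tm.split)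
lemma fa_mult_scale_l: "fa_mult (fa_scale a c) e = fa_scale a (fa_mult c e)"
  by (auto simp: fa_mult_def fun_eq_iff algebra_simps fapp split: tm.split)
lemma fa_mult_scale_r: "fa_mult e (fa_scale a c) = fa_scale a (fa_mult e c)"
  by (auto simp: fa_mult_def fun_eq_iff algebra_simps fapp split: tm.split)
lemma fa_mult_diff_l: "fa_mult (c - d) e = fa_mult c e - fa_mult d e"
  by (auto simp: fa_mult_def fun_eq_iff algebra_simps fapp split: tm.split)
lemma fa_mult_diff_r: "fa_mult e (c - d) = fa_mult e c - fa_mult e d"
  by (auto simp: fa_mult_def fun_eq_iff algebra_simps fapp split: tm.split)
lemma fa_mult_0_l[simp]: "fa_mult 0 e = 0"
  by (auto simp: fa_mult_def fun_eq_iff fapp split: tm.split)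
lemma fa_mult_0_r[simp]: "fa_mult e 0 = 0"
  by (auto simp: fa_mult_def fun_eq_iff fapp split: tm.split)
lemma fa_mult_uminus_l: "fa_mult (- c) e = - fa_mult c e"
  by (auto simp: fa_mult_def fun_eq_iff fapp split: tm.split)

definition brp :: "'x tm \<times> 'x tm \<Rightarrow> 'x tm" where "brp p = Br (fst p) (snd p)"

lemma inj_brp: "inj brp" by (auto simp: inj_def brp_def prod_eq_iff)

lemma supp_mult: "supp (fa_mult c d) \<subseteq> brp ` (supp c \<times> supp d)"
proof
  fix t assume "t \<in> supp (fa_mult c d)"
  then show "t \<in> brp ` (supp c \<times> supp d)"
    by (cases t) (auto simp: supp_def brp_def image_iff)
qed

lemma FA_mult[simp]: "c \<in> FA \<Longrightarrow> d \<in> FA \<Longrightarrow> fa_mult c d \<in> FA"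
  unfolding FA_iff by (rule finite_subset[OF supp_mult]) auto

definition gen :: "'x \<Rightarrow> ('x,'f::field) fa" where "gen x = (\<lambda>t. if t = Gen x then 1 else 0)"

lemma supp_gen: "supp (gen x) = {Gen x}" by (auto simp: supp_def gen_def)
lemma FA_gen[simp]: "gen x \<in> FA" by (simp add: FA_iff supp_gen)

locale lie = vector_space scale for scale :: "'f::field \<Rightarrow> 'v::ab_group_add \<Rightarrow> 'v" +
  fixes br :: "'v \<Rightarrow> 'v \<Rightarrow> 'v"
  assumes br_add_l: "br (x + y) z = br x z + br y z"
    and br_add_r: "br x (y + z) = br x y + br x z"
    and br_scale_l: "br (scale a x) y = scale a (br x y)"
    and br_scale_r: "br x (scale a y) = scale a (br x y)"
    and br_alt: "br x x = 0"
    and br_jacobi: "br x (br y z) + br y (br z x) + br z (br x y) = 0"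

lemma lie_algebra_lie: "lie_algebra scale br \<Longrightarrow> lie scale br"
  unfolding lie_algebra_def lie_def lie_axioms_def by auto

context lie begin

lemma br_0_l[simp]: "br 0 y = 0"
  using br_add_l[of 0 0 y] by simp
lemma br_0_r[simp]: "br x 0 = 0"
  using br_add_r[of x 0 0] by simp
lemma br_neg_l: "br (- x) y = - br x y"
  using br_add_l[of x "-x" y] by (simp add: eq_neg_iff_add_eq_0 add.commute)
lemma br_neg_r: "br x (- y) = - br x y"
  using br_add_r[of x y "-y"] by (simp add: eq_neg_iff_add_eq_0 add.commute)
lemma br_diff_l: "br (x - y) z = br x z - br y z"
  using br_add_l[of x "-y" z] by (simp add: br_neg_l)
lemma br_diff_r: "br z (x - y) = br z x - br z y"
  using br_add_r[of z x "-y"] by (simp add: br_neg_r)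
lemma br_anti: "br x y = - br y x"
  using br_alt[of "x+y"] br_alt[of x] br_alt[of y] by (simp add: br_add_l br_add_r eq_neg_iff_add_eq_0 add.commute)
lemma br_sum_l: "br (\<Sum>i\<in>A. g i) y = (\<Sum>i\<in>A. br (g i) y)"
  by (induction A rule: infinite_finite_induct) (auto simp: br_add_l)
lemma br_sum_r: "br y (\<Sum>i\<in>A. g i) = (\<Sum>i\<in>A. br y (g i))"
  by (induction A rule: infinite_finite_induct) (auto simp: br_add_r)

abbreviation ev where "ev \<equiv> eval_fa scale br"

lemma eval_sup:
  assumes "finite S" "supp c \<subseteq> S"
  shows "ev c = (\<Sum>t\<in>S. scale (c t) (eval_tm br t))"
  unfolding eval_fa_def
  by (rule sum.mono_neutral_left) (use assms in \<open>auto simp: supp_def\<close>)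

lemma eval_add: assumes "c \<in> FA" "d \<in> FA" shows "ev (c + d) = ev c + ev d"
proof -
  let ?S = "supp c \<union> supp d"
  have f: "finite ?S" using assms by (simp add: FA_iff)
  have "ev (c + d) = (\<Sum>t\<in>?S. scale ((c + d) t) (eval_tm br t))"
    by (rule eval_sup[OF f supp_add])
  also have "\<dots> = (\<Sum>t\<in>?S. scale (c t) (eval_tm br t)) + (\<Sum>t\<in>?S. scale (d t) (eval_tm br t))"
    by (simp add: scale_left_distrib sum.distrib fapp)
  also have "\<dots> = ev c + ev d"
    using eval_sup[OF f, of c] eval_sup[OF f, of d] by auto
  finally show ?thesis .
qed

lemma eval_scale: assumes "c \<in> FA" shows "ev (fa_scale a c) = scale a (ev c)"
proof -
  have f: "finite (supp c)" using assms by (simp add: FA_iff)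
  have "ev (fa_scale a c) = (\<Sum>t\<in>supp c. scale (a * c t) (eval_tm br t))"
    using eval_sup[OF f supp_scale, of a] by (simp add: fapp)
  also have "\<dots> = scale a (ev c)"
    using eval_sup[OF f, of c] by (simp add: scale_sum_right)
  finally show ?thesis .
qed

lemma eval_0[simp]: "ev 0 = 0" by (simp add: eval_fa_def fapp)

lemma eval_neg: assumes "c \<in> FA" shows "ev (- c) = - ev c"
  using eval_add[OF assms FA_uminus[OF assms]] by (simp add: eq_neg_iff_add_eq_0 add.commute)

lemma eval_diff: assumes "c \<in> FA" "d \<in> FA" shows "ev (c - d) = ev c - ev d"
  using eval_add[OF assms(1) FA_uminus[OF assms(2)]] eval_neg[OF assms(2)] by simp

lemma eval_sum: "(\<And>i. i \<in> A \<Longrightarrow> g i \<in> FA) \<Longrightarrow> ev (sum g A) = (\<Sum>i\<in>A. ev (g i))"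
proof (induction A rule: infinite_finite_induct)
  case (insert x F)
  have "ev (sum g (insert x F)) = ev (g x + sum g F)" by (simp only: sum.insert[OF insert(1,2)])
  also have "\<dots> = ev (g x) + ev (sum g F)" using insert FA_sum[of F g] by (intro eval_add) auto
  then show ?case using insert.IH insert.prems by (simp only: sum.insert[OF insert(1,2)]) simp
qed auto

lemma eval_gen[simp]: "ev (gen x) = x"
  using eval_sup[OF _ equalityD1[OF supp_gen], of x] by (simp add: gen_def)

lemma eval_mult: assumes "c \<in> FA" "d \<in> FA" shows "ev (fa_mult c d) = br (ev c) (ev d)"
proof -
  have fc: "finite (supp c)" and fd: "finite (supp d)" using assms by (auto simp: FA_iff)
  let ?P = "supp c \<times> supp d"
  have fP: "finite (brp ` ?P)" using fc fd by simp
  have "ev (fa_mult c d) = (\<Sum>t\<in>brp ` ?P. scale (fa_mult c d t) (eval_tm br t))"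
    by (rule eval_sup[OF fP supp_mult])
  also have "\<dots> = (\<Sum>p\<in>?P. scale (fa_mult c d (brp p)) (eval_tm br (brp p)))"
    by (rule sum.reindex[unfolded comp_def]) (rule inj_on_subset[OF inj_brp], simp)
  also have "\<dots> = (\<Sum>s\<in>supp c. \<Sum>u\<in>supp d. br (scale (c s) (eval_tm br s)) (scale (d u) (eval_tm br u)))"
    by (simp add: sum.cartesian_product brp_def br_scale_l br_scale_r split_def mult.commute)
  also have "\<dots> = br (ev c) (ev d)"
    using eval_sup[OF fc subset_refl] eval_sup[OF fd subset_refl]
    by (simp add: br_sum_l br_sum_r sum.swap[of _ "supp d"])
  finally show ?thesis .
qed

end

lemma I_FA: "(u::('x,'f::field) fa) \<in> lie_rel_ideal \<Longrightarrow> u \<in> FA"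
  apply (induction rule: lie_rel_ideal.induct)
  apply (unfold fa_add_eq fa_zero_eq)
  apply (intro FA_add FA_mult FA_0 FA_scale; assumption)+
  done

context lie begin

definition KN :: "'v set \<Rightarrow> ('v,'f) fa set" where "KN N = {c \<in> FA. ev c \<in> N}"
definition JN :: "'v set \<Rightarrow> ('v,'f) fa set" where
  "JN N = FV.span ({fa_mult r a | r a. r \<in> KN N \<and> a \<in> FA} \<union> lie_rel_ideal)"

lemma I_ev: "(u::('v,'f) fa) \<in> lie_rel_ideal \<Longrightarrow> ev u = 0"
proof (induction rule: lie_rel_ideal.induct)
  case (alt a) then show ?case by (simp add: eval_mult br_alt)
next
  case (jac a b c)
  have "ev (fa_mult a (fa_mult b c) + fa_mult b (fa_mult c a) + fa_mult c (fa_mult a b)) = 0"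
    using jac by (simp add: eval_mult eval_add br_jacobi)
  then show ?case unfolding fa_add_eq .
next
  case (add u v)
  have "ev (u + v) = 0" using add by (simp add: eval_add I_FA)
  then show ?case unfolding fa_add_eq .
next
  case (smult u r) then show ?case by (simp add: eval_scale I_FA)
next
  case (multl u a) then show ?case by (simp add: eval_mult I_FA)
next
  case (multr u a) then show ?case by (simp add: eval_mult I_FA)
qed (unfold fa_zero_eq, rule eval_0)

lemma KN_FA: "c \<in> KN N \<Longrightarrow> c \<in> FA" by (simp add: KN_def)

lemma JN_FA: "JN N \<subseteq> FA"
  unfolding JN_def by (rule FA_span) (auto simp: KN_def I_FA)

lemma JN_subspace: "FV.subspace (JN N)"
  unfolding JN_def by (rule FV.subspace_span)

lemma JN_mono: "N \<subseteq> N' \<Longrightarrow> JN N \<subseteq> JN N'"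
  unfolding JN_def KN_def by (rule FV.span_mono) blast

lemma mult_K_l: "r \<in> KN N \<Longrightarrow> a \<in> FA \<Longrightarrow> fa_mult r a \<in> JN N"
  unfolding JN_def by (rule FV.span_base) blast

lemma I_J: "u \<in> lie_rel_ideal \<Longrightarrow> u \<in> JN N"
  unfolding JN_def by (rule FV.span_base) blast

lemma J_add: "u \<in> JN N \<Longrightarrow> v \<in> JN N \<Longrightarrow> u + v \<in> JN N"
  using FV.subspace_add[OF JN_subspace] .
lemma J_diff: "u \<in> JN N \<Longrightarrow> v \<in> JN N \<Longrightarrow> u - v \<in> JN N"
  using FV.subspace_diff[OF JN_subspace] .
lemma J_scale: "u \<in> JN N \<Longrightarrow> fa_scale a u \<in> JN N"
  using FV.subspace_scale[OF JN_subspace] .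
lemma J_0: "0 \<in> JN N"
  using FV.subspace_0[OF JN_subspace] .
lemma J_neg: "u \<in> JN N \<Longrightarrow> - u \<in> JN N"
  using FV.subspace_neg[OF JN_subspace] .

lemma anti_J: assumes "a \<in> FA" "b \<in> FA" shows "fa_mult a b + fa_mult b a \<in> JN N"
proof -
  have "fa_mult (a + b) (a + b) - fa_mult a a - fa_mult b b = fa_mult a b + fa_mult b a"
    by (simp add: fa_mult_add_l fa_mult_add_r algebra_simps)
  moreover have "fa_mult (a + b) (a + b) - fa_mult a a - fa_mult b b \<in> JN N"
    using assms by (intro J_diff I_J lie_rel_ideal.alt) auto
  ultimately show ?thesis by simp
qed

lemma anti_J': assumes "a \<in> FA" "b \<in> FA" "fa_mult a b + u \<in> JN N" shows "u - fa_mult b a \<in> JN N"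
proof -
  have "(fa_mult a b + u) - (fa_mult a b + fa_mult b a) \<in> JN N"
    using assms anti_J by (intro J_diff) auto
  then show ?thesis by (simp add: algebra_simps)
qed

lemma mult_K_r: assumes "r \<in> KN N" "a \<in> FA" shows "fa_mult a r \<in> JN N"
proof -
  have "(fa_mult a r + fa_mult r a) - fa_mult r a \<in> JN N"
    using assms KN_FA anti_J mult_K_l by (intro J_diff) auto
  then show ?thesis by simp
qed

lemma jac_J: assumes "a \<in> FA" "b \<in> FA" "c \<in> FA"
  shows "fa_mult a (fa_mult b c) + fa_mult b (fa_mult c a) + fa_mult c (fa_mult a b) \<in> JN N"
  using I_J[OF lie_rel_ideal.jac[OF assms]] by simp

lemma KN_diff: assumes "subspace N" "c \<in> KN N" "d \<in> KN N" shows "c - d \<in> KN N"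
  using assms by (auto simp: KN_def eval_diff subspace_diff)

lemma KN_add: assumes "subspace N" "c \<in> KN N" "d \<in> KN N" shows "c + d \<in> KN N"
  using assms by (auto simp: KN_def eval_add subspace_add)

lemma KN_scale: assumes "subspace N" "c \<in> KN N" shows "fa_scale a c \<in> KN N"
  using assms by (auto simp: KN_def eval_scale subspace_scale)

lemma gen_in_KN: "y \<in> N \<Longrightarrow> gen y \<in> KN N" by (simp add: KN_def)

lemma minus_gen_KN: assumes "subspace N" "c \<in> FA" shows "c - gen (ev c) \<in> KN N"
  using assms by (auto simp: KN_def eval_diff subspace_0)

lemma gen_add_KN: assumes "subspace N" shows "gen (x + y) - gen x - gen y \<in> KN N"
  using assms by (auto simp: KN_def eval_diff subspace_0)

lemma gen_scale_KN: assumes "subspace N" shows "gen (scale a x) - fa_scale a (gen x) \<in> KN N"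
  using assms by (auto simp: KN_def eval_diff eval_scale subspace_0)

lemma gen_0_KN: assumes "subspace N" shows "gen 0 \<in> KN N"
  using assms by (auto simp: KN_def subspace_0)

lemma cong_gen: assumes "subspace N" "a \<in> FA" "b \<in> FA"
  shows "fa_mult a b - fa_mult (gen (ev a)) (gen (ev b)) \<in> JN N"
proof -
  have "fa_mult a b - fa_mult (gen (ev a)) (gen (ev b)) =
        fa_mult (a - gen (ev a)) b + fa_mult (gen (ev a)) (b - gen (ev b))"
    by (simp add: fa_mult_diff_l fa_mult_diff_r)
  also have "\<dots> \<in> JN N"
    using assms by (intro J_add mult_K_l mult_K_r minus_gen_KN) auto
  finally show ?thesis .
qed

lemma subspace_right:
  assumes N: "subspace N" and Sp: "FV.subspace Sp" "JN N \<subseteq> Sp" and u: "u \<in> FA"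
  shows "subspace {y. fa_mult u (gen y) \<in> Sp}"
  unfolding subspace_def
proof (intro conjI allI impI ballI; clarsimp)
  show "fa_mult u (gen 0) \<in> Sp" using mult_K_r[OF gen_0_KN[OF N] u] Sp by auto
next
  fix x y assume x: "fa_mult u (gen x) \<in> Sp" and y: "fa_mult u (gen y) \<in> Sp"
  have "fa_mult u (gen (x + y)) = fa_mult u (gen (x + y) - gen x - gen y) + fa_mult u (gen x) + fa_mult u (gen y)"
    by (simp add: fa_mult_diff_r)
  also have "\<dots> \<in> Sp"
    using mult_K_r[OF gen_add_KN[OF N] u, of x y] x y Sp by (intro FV.subspace_add) auto
  finally show "fa_mult u (gen (x + y)) \<in> Sp" .
next
  fix c x assume x: "fa_mult u (gen x) \<in> Sp"
  have "fa_mult u (gen (scale c x)) = fa_mult u (gen (scale c x) - fa_scale c (gen x)) + fa_scale c (fa_mult u (gen x))"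
    by (simp add: fa_mult_diff_r fa_mult_scale_r)
  also have "\<dots> \<in> Sp"
    using mult_K_r[OF gen_scale_KN[OF N] u, of c x] x Sp by (intro FV.subspace_add FV.subspace_scale) auto
  finally show "fa_mult u (gen (scale c x)) \<in> Sp" .
qed

lemma subspace_left:
  assumes N: "subspace N" and Sp: "FV.subspace Sp" "JN N \<subseteq> Sp" and u: "u \<in> FA"
  shows "subspace {y. fa_mult (gen y) u \<in> Sp}"
  unfolding subspace_def
proof (intro conjI allI impI ballI; clarsimp)
  show "fa_mult (gen 0) u \<in> Sp" using mult_K_l[OF gen_0_KN[OF N] u] Sp by auto
next
  fix x y assume x: "fa_mult (gen x) u \<in> Sp" and y: "fa_mult (gen y) u \<in> Sp"
  have "fa_mult (gen (x + y)) u = fa_mult (gen (x + y) - gen x - gen y) u + fa_mult (gen x) u + fa_mult (gen y) u"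
    by (simp add: fa_mult_diff_l)
  also have "\<dots> \<in> Sp"
    using mult_K_l[OF gen_add_KN[OF N] u, of x y] x y Sp by (intro FV.subspace_add) auto
  finally show "fa_mult (gen (x + y)) u \<in> Sp" .
next
  fix c x assume x: "fa_mult (gen x) u \<in> Sp"
  have "fa_mult (gen (scale c x)) u = fa_mult (gen (scale c x) - fa_scale c (gen x)) u + fa_scale c (fa_mult (gen x) u)"
    by (simp add: fa_mult_diff_l fa_mult_scale_l)
  also have "\<dots> \<in> Sp"
    using mult_K_l[OF gen_scale_KN[OF N] u, of c x] x Sp by (intro FV.subspace_add FV.subspace_scale) auto
  finally show "fa_mult (gen (scale c x)) u \<in> Sp" .
qed

lemma JN0_ev: assumes "u \<in> JN {0}" shows "ev u = 0"
proof -
  have "FV.subspace {c \<in> FA. ev c = 0}"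
    unfolding FV.subspace_def by (auto simp: eval_add eval_scale)
  moreover have "{fa_mult r a | r a. r \<in> KN {0} \<and> a \<in> FA} \<union> lie_rel_ideal \<subseteq> {c \<in> FA. ev c = 0}"
    by (auto simp: KN_def eval_mult I_FA I_ev)
  ultimately show ?thesis using assms unfolding JN_def using FV.span_minimal by blast
qed

end

section \<open>Dimensions of quotients\<close>

definition indep_mod :: "('x,'f::field) fa set \<Rightarrow> ('x,'f) fa set \<Rightarrow> bool" where
  "indep_mod W U \<longleftrightarrow> (\<forall>c. (\<Sum>s\<in>U. fa_scale (c s) s) \<in> W \<longrightarrow> (\<forall>s\<in>U. c s = 0))"

lemma sum_scale_fun: "(\<lambda>t. \<Sum>s\<in>S. c s * s t) = (\<Sum>s\<in>S. fa_scale (c s) s)"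
  by (simp add: fun_eq_iff sum_fun_app fa_scale_app)

lemma quot_dim_iff: "quot_dim V W d \<longleftrightarrow>
   (\<exists>S. finite S \<and> card S = d \<and> S \<subseteq> V \<and> V \<subseteq> FV.span (S \<union> W) \<and> indep_mod W S)"
  unfolding quot_dim_def indep_mod_def sum_scale_fun fa_span_eq ..

lemma sum_delta_scale:
  assumes "finite U" "u \<in> U"
  shows "(\<Sum>s\<in>U. fa_scale (if s = u then 1 else 0) s) = (u :: ('x,'f::field) fa)"
proof -
  have "(\<Sum>s\<in>U. fa_scale (if s = u then 1 else 0) s) = (\<Sum>s\<in>U. if s = u then s else 0)"
    by (rule sum.cong) auto
  also have "\<dots> = u" using assms by (simp add: sum.delta)
  finally show ?thesis .
qed

lemma indep_mod_bound:
  fixes W :: "('x,'f::field) fa set"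
  assumes W: "FV.subspace W" and T: "finite T" and U: "finite U"
    and sp: "U \<subseteq> FV.span (T \<union> W)" and ind: "indep_mod W U"
  shows "card U \<le> card T"
proof -
  have "\<forall>u\<in>U. \<exists>w. w \<in> W \<and> u - w \<in> FV.span T"
  proof
    fix u assume "u \<in> U"
    then have "u \<in> FV.span (T \<union> W)" using sp by auto
    then obtain x y where "u = x + y" "x \<in> FV.span T" "y \<in> FV.span W"
      unfolding FV.span_Un by blast
    moreover have "FV.span W = W" using W by simp
    ultimately show "\<exists>w. w \<in> W \<and> u - w \<in> FV.span T" by (intro exI[of _ y]) auto
  qed
  then obtain w where w: "\<And>u. u \<in> U \<Longrightarrow> w u \<in> W" "\<And>u. u \<in> U \<Longrightarrow> u - w u \<in> FV.span T"
    by metis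
  define g where "g u = u - w u" for u
  have sumW: "(\<Sum>u\<in>U. fa_scale (c u) (w u)) \<in> W" for c
    using w(1) W by (intro FV.subspace_sum FV.subspace_scale) auto
  have sum_g: "(\<Sum>u\<in>U. fa_scale (c u) (g u)) = (\<Sum>u\<in>U. fa_scale (c u) u) - (\<Sum>u\<in>U. fa_scale (c u) (w u))" for c
    by (simp add: g_def FV.scale_right_diff_distrib sum_subtractf)
  have inj: "inj_on g U"
  proof (rule inj_onI, rule ccontr)
    fix u1 u2 assume u: "u1 \<in> U" "u2 \<in> U" "g u1 = g u2" "u1 \<noteq> u2"
    define c where "c s = (if s = u1 then 1 else 0) - (if s = u2 then (1::'f) else 0)" for s
    have "(\<Sum>s\<in>U. fa_scale (c s) s) = (\<Sum>s\<in>U. fa_scale (if s = u1 then 1 else 0) s) - (\<Sum>s\<in>U. fa_scale (if s = u2 then 1 else 0) s)"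
      by (simp add: c_def FV.scale_left_diff_distrib sum_subtractf)
    also have "\<dots> = u1 - u2" using U u by (simp add: sum_delta_scale)
    also have "\<dots> = w u1 - w u2" using u(3) unfolding g_def by (simp add: algebra_simps)
    also have "\<dots> \<in> W" using w(1) u W by (intro FV.subspace_diff) auto
    finally have "c u1 = 0" using ind u unfolding indep_mod_def by blast
    then show False using u by (simp add: c_def)
  qed
  have indep: "FV.independent (g ` U)"
  proof
    assume "FV.dependent (g ` U)"
    then obtain c where c: "\<exists>v\<in>g ` U. c v \<noteq> 0" "(\<Sum>v\<in>g ` U. fa_scale (c v) v) = 0"
      using FV.dependent_finite[of "g ` U"] U by auto
    have "(\<Sum>u\<in>U. fa_scale (c (g u)) (g u)) = 0"
      using c(2) sum.reindex[OF inj, of "\<lambda>v. fa_scale (c v) v"] by simp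
    then have "(\<Sum>u\<in>U. fa_scale (c (g u)) u) = (\<Sum>u\<in>U. fa_scale (c (g u)) (w u))"
      using sum_g[of "\<lambda>u. c (g u)"] by simp
    then have "(\<Sum>u\<in>U. fa_scale (c (g u)) u) \<in> W" using sumW by simp
    then have "\<forall>u\<in>U. c (g u) = 0" using ind[unfolded indep_mod_def, rule_format, of "\<lambda>u. c (g u)"] by blast
    then show False using c(1) by auto
  qed
  have "g ` U \<subseteq> FV.span T" using w(2) by (auto simp: g_def)
  then have "card (g ` U) \<le> card T" using FV.independent_span_bound[OF T indep] by simp
  then show ?thesis using card_image[OF inj] by simp
qed

lemma indep_mod_insert:
  fixes W :: "('x,'f::field) fa set"
  assumes W: "FV.subspace W" and U: "finite U" and ind: "indep_mod W U"
    and v: "v \<notin> FV.span (U \<union> W)"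
  shows "indep_mod W (insert v U)"
  unfolding indep_mod_def
proof (intro allI impI)
  fix c assume c: "(\<Sum>s\<in>insert v U. fa_scale (c s) s) \<in> W"
  have vU: "v \<notin> U" using v FV.span_base by blast
  have eq: "(\<Sum>s\<in>insert v U. fa_scale (c s) s) = fa_scale (c v) v + (\<Sum>s\<in>U. fa_scale (c s) s)"
    using U vU by simp
  have cv: "c v = 0"
  proof (rule ccontr)
    assume cv: "c v \<noteq> 0"
    define w where "w = (\<Sum>s\<in>insert v U. fa_scale (c s) s)"
    define r where "r = (\<Sum>s\<in>U. fa_scale (c s) s)"
    have wr: "w - r = fa_scale (c v) v" using eq unfolding w_def r_def by simp
    have "fa_scale (inverse (c v)) (w - r) = v" unfolding wr using cv by (simp add: FV.scale_scale)
    moreover have "w \<in> FV.span (U \<union> W)" using c unfolding w_def by (auto intro: FV.span_base)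
    moreover have "r \<in> FV.span (U \<union> W)" unfolding r_def
      by (intro FV.span_sum FV.span_scale FV.span_base) auto
    ultimately have "v \<in> FV.span (U \<union> W)" using FV.span_scale[OF FV.span_diff] by metis
    then show False using v by simp
  qed
  then have "(\<Sum>s\<in>U. fa_scale (c s) s) \<in> W" using c eq by simp
  then have "\<forall>s\<in>U. c s = 0" using ind unfolding indep_mod_def by blast
  then show "\<forall>s\<in>insert v U. c s = 0" using cv by simp
qed

lemma quot_dim_exists:
  fixes W :: "('x,'f::field) fa set"
  assumes W: "FV.subspace W" and T: "finite T" and V: "V \<subseteq> FV.span (T \<union> W)"
  shows "\<exists>d. quot_dim V W d"
proof -
  define P where "P n \<longleftrightarrow> (\<exists>U. finite U \<and> card U = n \<and> U \<subseteq> V \<and> indep_mod W U)" for n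
  have P0: "P 0" unfolding P_def indep_mod_def by (intro exI[of _ "{}"]) auto
  have bnd: "P n \<Longrightarrow> n \<le> card T" for n
    unfolding P_def using indep_mod_bound[OF W T] V by blast
  define n where "n = (GREATEST n. P n)"
  have Pn: "P n" unfolding n_def using GreatestI_nat[of P 0 "card T"] P0 bnd by blast
  have gr: "P m \<Longrightarrow> m \<le> n" for m unfolding n_def using Greatest_le_nat[of P m "card T"] bnd by blast
  obtain U where U: "finite U" "card U = n" "U \<subseteq> V" "indep_mod W U" using Pn unfolding P_def by blast
  have "V \<subseteq> FV.span (U \<union> W)"
  proof
    fix v assume vV: "v \<in> V"
    show "v \<in> FV.span (U \<union> W)"
    proof (rule ccontr)
      assume v: "v \<notin> FV.span (U \<union> W)"
      then have vU: "v \<notin> U" using FV.span_base by blast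
      have "P (Suc n)" unfolding P_def
        using U vV vU indep_mod_insert[OF W U(1) U(4) v]
        by (intro exI[of _ "insert v U"]) auto
      then have "Suc n \<le> n" by (rule gr)
      then show False by simp
    qed
  qed
  then show ?thesis unfolding quot_dim_iff using U by blast
qed

lemma quot_dim_le:
  fixes W :: "('x,'f::field) fa set"
  assumes W: "FV.subspace W" and q: "quot_dim V W d" and U: "finite U" "U \<subseteq> FV.span (V \<union> W)" "indep_mod W U"
  shows "card U \<le> d"
proof -
  obtain S where S: "finite S" "card S = d" "S \<subseteq> V" "V \<subseteq> FV.span (S \<union> W)" "indep_mod W S"
    using q unfolding quot_dim_iff by blast
  have "FV.span (V \<union> W) \<subseteq> FV.span (S \<union> W)"
    using S(4) FV.span_superset[of "S \<union> W"] by (intro FV.span_minimal) auto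
  then have "U \<subseteq> FV.span (S \<union> W)" using U(2) by (rule order.trans[rotated])
  from indep_mod_bound[OF W S(1) U(1) this U(3)] show ?thesis using S(2) by simp
qed

lemma quot_dim_unique:
  fixes W :: "('x,'f::field) fa set"
  assumes W: "FV.subspace W" and q1: "quot_dim V W d1" and q2: "quot_dim V W d2"
  shows "d1 = d2"
proof -
  obtain S1 where S1: "finite S1" "card S1 = d1" "S1 \<subseteq> V" "V \<subseteq> FV.span (S1 \<union> W)" "indep_mod W S1"
    using q1[unfolded quot_dim_iff] by metis
  obtain S2 where S2: "finite S2" "card S2 = d2" "S2 \<subseteq> V" "V \<subseteq> FV.span (S2 \<union> W)" "indep_mod W S2"
    using q2[unfolded quot_dim_iff] by metis
  have sp: "V \<subseteq> FV.span (V \<union> W)" using FV.span_superset[of "V \<union> W"] by blast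
  have "card S1 \<le> d2" using quot_dim_le[OF W q2 S1(1) order.trans[OF S1(3) sp] S1(5)] .
  moreover have "card S2 \<le> d1" using quot_dim_le[OF W q1 S2(1) order.trans[OF S2(3) sp] S2(5)] .
  ultimately show ?thesis using S1(2) S2(2) by simp
qed

lemma the_quot_dim:
  fixes W :: "('x,'f::field) fa set"
  assumes W: "FV.subspace W" and q: "quot_dim V W d"
  shows "(THE d. quot_dim V W d) = d"
  by (rule the_equality[where P="\<lambda>d. quot_dim V W d", OF q]) (rule quot_dim_unique[OF W _ q])

context lie begin

definition A2 :: "('v,'f) fa set" where
  "A2 = FV.span {fa_mult a b | a b. a \<in> FA \<and> b \<in> FA}"

abbreviation L2 where "L2 \<equiv> derived scale br"

lemma A2_FA: "A2 \<subseteq> FA"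
  unfolding A2_def by (rule FA_span) auto

lemma mult_A2: "a \<in> FA \<Longrightarrow> b \<in> FA \<Longrightarrow> fa_mult a b \<in> A2"
  unfolding A2_def by (rule FV.span_base) blast

lemma subspace_L2: "subspace L2"
  unfolding derived_def by simp

lemma br_L2: "br x y \<in> L2"
  unfolding derived_def by (rule span_base) blast

lemma span_UNIV_sub:
  assumes "span G = UNIV" "subspace Y" "G \<subseteq> Y" shows "Y = UNIV"
  using span_minimal[OF assms(3,2)] assms(1) by auto

lemma L2_sub:
  assumes "subspace Y" "\<And>x y. br x y \<in> Y" shows "L2 \<subseteq> Y"
  unfolding derived_def using assms by (intro span_minimal) auto

lemma A2_sub_gen:
  assumes N: "subspace N" and Sp: "FV.subspace Sp" "JN N \<subseteq> Sp"
    and g: "\<And>x y. fa_mult (gen x) (gen y) \<in> Sp"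
  shows "A2 \<subseteq> Sp"
  unfolding A2_def
proof (rule FV.span_minimal[OF _ Sp(1)], clarify)
  fix a b :: "('v,'f) fa" assume ab: "a \<in> FA" "b \<in> FA"
  have "fa_mult a b = (fa_mult a b - fa_mult (gen (ev a)) (gen (ev b))) + fa_mult (gen (ev a)) (gen (ev b))"
    by simp
  also have "\<dots> \<in> Sp" using cong_gen[OF N ab] Sp g by (intro FV.subspace_add) auto
  finally show "fa_mult a b \<in> Sp" .
qed

lemma gen_pairs_all:
  assumes N: "subspace N" and Sp: "FV.subspace Sp" "JN N \<subseteq> Sp"
    and G: "span G = UNIV" and g: "\<And>x y. x \<in> G \<Longrightarrow> y \<in> G \<Longrightarrow> fa_mult (gen x) (gen y) \<in> Sp"
  shows "fa_mult (gen x) (gen y) \<in> Sp"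
proof -
  have 1: "fa_mult (gen x) (gen y) \<in> Sp" if y: "y \<in> G" for x y
  proof -
    have "{x. fa_mult (gen x) (gen y) \<in> Sp} = UNIV"
      by (rule span_UNIV_sub[OF G subspace_left[OF N Sp FA_gen]]) (use g y in auto)
    then show ?thesis by auto
  qed
  have "{y. fa_mult (gen x) (gen y) \<in> Sp} = UNIV"
    by (rule span_UNIV_sub[OF G subspace_right[OF N Sp FA_gen]]) (use 1 in auto)
  then show ?thesis by auto
qed

lemma KN_mono: "N \<subseteq> N' \<Longrightarrow> KN N \<subseteq> KN N'" by (auto simp: KN_def)

lemma gen_br_K: assumes "subspace N"
  shows "gen (br x y) - fa_mult (gen x) (gen y) \<in> KN N"
  using assms by (simp add: KN_def eval_diff eval_mult subspace_0)

lemma z_br_J: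
  assumes N: "subspace N" and zx: "br z x \<in> N" and zy: "br z y \<in> N"
  shows "fa_mult (gen z) (gen (br x y)) \<in> JN N"
proof -
  have yz: "br y z \<in> N" using zy br_anti[of y z] N by (simp add: subspace_neg)
  have K1: "fa_mult (gen y) (gen z) \<in> KN N" using yz by (simp add: KN_def eval_mult)
  have K2: "fa_mult (gen z) (gen x) \<in> KN N" using zx by (simp add: KN_def eval_mult)
  have "fa_mult (gen x) (fa_mult (gen y) (gen z)) + fa_mult (gen y) (fa_mult (gen z) (gen x)) +
        fa_mult (gen z) (fa_mult (gen x) (gen y)) \<in> JN N" by (rule jac_J) auto
  moreover have "fa_mult (gen x) (fa_mult (gen y) (gen z)) \<in> JN N" by (rule mult_K_r[OF K1]) auto
  moreover have "fa_mult (gen y) (fa_mult (gen z) (gen x)) \<in> JN N" by (rule mult_K_r[OF K2]) auto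
  ultimately have "fa_mult (gen x) (fa_mult (gen y) (gen z)) + fa_mult (gen y) (fa_mult (gen z) (gen x)) +
        fa_mult (gen z) (fa_mult (gen x) (gen y)) - fa_mult (gen x) (fa_mult (gen y) (gen z))
        - fa_mult (gen y) (fa_mult (gen z) (gen x)) \<in> JN N"
    by (intro J_diff)
  then have "fa_mult (gen z) (fa_mult (gen x) (gen y)) \<in> JN N" by (simp add: algebra_simps)
  moreover have "fa_mult (gen z) (gen (br x y) - fa_mult (gen x) (gen y)) \<in> JN N"
    by (rule mult_K_r[OF gen_br_K[OF N]]) auto
  ultimately show ?thesis by (metis J_add fa_mult_diff_r diff_add_cancel)
qed

lemma JN_insert:
  assumes N: "subspace N" and Sp: "FV.subspace Sp" "JN N \<subseteq> Sp"
    and zy: "\<And>y. fa_mult (gen z) (gen y) \<in> Sp"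
  shows "JN (span (insert z N)) \<subseteq> Sp"
  unfolding JN_def
proof (rule FV.span_minimal[OF _ Sp(1)], rule Un_least)
  show "lie_rel_ideal \<subseteq> Sp" using Sp(2) I_J by auto
next
  show "{fa_mult r a |r a. r \<in> KN (span (insert z N)) \<and> a \<in> FA} \<subseteq> Sp"
  proof clarify
    fix r a :: "('v,'f) fa" assume r: "r \<in> KN (span (insert z N))" and a: "a \<in> FA"
    have rFA: "r \<in> FA" and "ev r \<in> span (insert z N)" using r by (auto simp: KN_def)
    moreover have "span N = N" using N by simp
    ultimately obtain l where l: "ev r - scale l z \<in> N" by (auto simp: span_breakdown_eq)
    have r0: "r - fa_scale l (gen z) \<in> KN N"
      using l rFA by (simp add: KN_def eval_diff eval_scale)
    have "fa_mult r a = fa_mult (r - fa_scale l (gen z)) a + fa_scale l (fa_mult (gen z) a)"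
      by (simp add: fa_mult_diff_l fa_mult_scale_l)
    moreover have "fa_mult (r - fa_scale l (gen z)) a \<in> Sp" using mult_K_l[OF r0 a] Sp by auto
    moreover have "fa_mult (gen z) a \<in> Sp"
    proof -
      have "fa_mult (gen z) a = fa_mult (gen z) (a - gen (ev a)) + fa_mult (gen z) (gen (ev a))"
        by (simp add: fa_mult_diff_r)
      moreover have "fa_mult (gen z) (a - gen (ev a)) \<in> Sp"
        using mult_K_r[OF minus_gen_KN[OF N a]] Sp by auto
      ultimately show ?thesis using zy Sp(1) by (metis FV.subspace_add)
    qed
    ultimately show "fa_mult r a \<in> Sp" using Sp(1) by (metis FV.subspace_add FV.subspace_scale)
  qed
qed

lemma step_central:
  assumes N: "subspace N" and z: "\<And>y. br y z \<in> N"
    and X: "span (X \<union> L2) = UNIV"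
  shows "JN (span (insert z N)) \<subseteq> FV.span ((\<lambda>x. fa_mult (gen z) (gen x)) ` X \<union> JN N)"
proof (rule JN_insert[OF N])
  let ?Sp = "FV.span ((\<lambda>x. fa_mult (gen z) (gen x)) ` X \<union> JN N)"
  have "FV.subspace ?Sp" by simp
  moreover have "JN N \<subseteq> ?Sp" by (rule order.trans[OF _ FV.span_superset]) auto
  ultimately show Sp: "FV.subspace ?Sp" "JN N \<subseteq> ?Sp" by auto
  have zx: "br z x \<in> N" for x using z[of x] br_anti[of z x] N by (simp add: subspace_neg)
  have Y: "subspace {y. fa_mult (gen z) (gen y) \<in> ?Sp}" by (rule subspace_right[OF N Sp FA_gen])
  have "L2 \<subseteq> {y. fa_mult (gen z) (gen y) \<in> ?Sp}"
    by (rule L2_sub[OF Y]) (use z_br_J[OF N zx zx] Sp(2) in auto)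
  moreover have "X \<subseteq> {y. fa_mult (gen z) (gen y) \<in> ?Sp}"
    by (auto intro!: FV.span_base)
  ultimately have "{y. fa_mult (gen z) (gen y) \<in> ?Sp} = UNIV"
    by (intro span_UNIV_sub[OF X Y]) auto
  then show "fa_mult (gen z) (gen y) \<in> ?Sp" for y by auto
qed

lemma step_final:
  assumes N: "subspace N" and L: "L2 \<subseteq> span (insert (br a b) N)"
  shows "JN (span (insert (br a b) N)) \<subseteq>
           FV.span ({fa_mult (gen (br a b)) (gen a), fa_mult (gen (br a b)) (gen b)} \<union> JN N)"
proof (rule JN_insert[OF N])
  let ?z = "br a b"
  let ?Sp = "FV.span ({fa_mult (gen ?z) (gen a), fa_mult (gen ?z) (gen b)} \<union> JN N)"
  have "FV.subspace ?Sp" by simp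
  moreover have "JN N \<subseteq> ?Sp" by (rule order.trans[OF _ FV.span_superset]) auto
  ultimately show Sp: "FV.subspace ?Sp" "JN N \<subseteq> ?Sp" by auto
  have C: "fa_mult (gen ?z) (gen c) \<in> JN N" if ca: "br c a \<in> N" and cb: "br c b \<in> N" for c
  proof -
    have bc: "br b c \<in> N" using cb br_anti[of b c] N by (simp add: subspace_neg)
    have K1: "fa_mult (gen b) (gen c) \<in> KN N" using bc by (simp add: KN_def eval_mult)
    have K2: "fa_mult (gen c) (gen a) \<in> KN N" using ca by (simp add: KN_def eval_mult)
    have "fa_mult (gen c) (fa_mult (gen a) (gen b)) + fa_mult (gen a) (fa_mult (gen b) (gen c)) +
          fa_mult (gen b) (fa_mult (gen c) (gen a)) \<in> JN N" by (rule jac_J) auto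
    moreover have "fa_mult (gen a) (fa_mult (gen b) (gen c)) \<in> JN N" by (rule mult_K_r[OF K1]) auto
    moreover have "fa_mult (gen b) (fa_mult (gen c) (gen a)) \<in> JN N" by (rule mult_K_r[OF K2]) auto
    ultimately have "fa_mult (gen c) (fa_mult (gen a) (gen b)) + fa_mult (gen a) (fa_mult (gen b) (gen c)) +
          fa_mult (gen b) (fa_mult (gen c) (gen a)) - fa_mult (gen a) (fa_mult (gen b) (gen c))
          - fa_mult (gen b) (fa_mult (gen c) (gen a)) \<in> JN N"
      by (intro J_diff)
    then have 1: "fa_mult (gen c) (fa_mult (gen a) (gen b)) \<in> JN N" by (simp add: algebra_simps)
    have "fa_mult (fa_mult (gen a) (gen b)) (gen c) + fa_mult (gen c) (fa_mult (gen a) (gen b)) \<in> JN N"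
      by (rule anti_J) auto
    then have 2: "fa_mult (fa_mult (gen a) (gen b)) (gen c) \<in> JN N"
      using 1 by (metis J_diff add_diff_cancel_right')
    have "fa_mult (gen ?z - fa_mult (gen a) (gen b)) (gen c) \<in> JN N"
      by (rule mult_K_l[OF gen_br_K[OF N]]) auto
    then show ?thesis using 2 by (metis J_add fa_mult_diff_l diff_add_cancel)
  qed
  have Y: "subspace {y. fa_mult (gen ?z) (gen y) \<in> ?Sp}" by (rule subspace_right[OF N Sp FA_gen])
  show "fa_mult (gen ?z) (gen y) \<in> ?Sp" for y
  proof -
    have "br y a \<in> span (insert ?z N)" using L br_L2 by auto
    moreover have sN: "span N = N" using N by simp
    ultimately obtain al where al: "br y a - scale al ?z \<in> N" by (auto simp: span_breakdown_eq)
    have "br y b \<in> span (insert ?z N)" using L br_L2 by auto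
    then obtain be where be: "br y b - scale be ?z \<in> N" using sN by (auto simp: span_breakdown_eq)
    define y' where "y' = y + scale al b - scale be a"
    have "br y' a = br y a - scale al ?z"
      unfolding y'_def by (simp add: br_add_l br_diff_l br_scale_l br_alt br_anti[of b a] scale_right_diff_distrib)
    then have ya: "br y' a \<in> N" using al by simp
    have "br y' b = br y b - scale be ?z"
      unfolding y'_def by (simp add: br_add_l br_diff_l br_scale_l br_alt)
    then have yb: "br y' b \<in> N" using be by simp
    have "y' \<in> {y. fa_mult (gen ?z) (gen y) \<in> ?Sp}" using C[OF ya yb] Sp(2) by auto
    moreover have "a \<in> {y. fa_mult (gen ?z) (gen y) \<in> ?Sp}" "b \<in> {y. fa_mult (gen ?z) (gen y) \<in> ?Sp}"
      by (auto intro!: FV.span_base)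
    ultimately have "y' - scale al b + scale be a \<in> {y. fa_mult (gen ?z) (gen y) \<in> ?Sp}"
      using Y by (metis subspace_add subspace_diff subspace_scale)
    then show ?thesis unfolding y'_def by simp
  qed
qed

end

lemma card_pairs: "card {p :: nat \<times> nat. fst p < snd p \<and> snd p < k} = k * (k - 1) div 2"
proof (induction k)
  case 0 then show ?case by simp
next
  case (Suc k)
  have eq: "{p :: nat \<times> nat. fst p < snd p \<and> snd p < Suc k} =
            {p. fst p < snd p \<and> snd p < k} \<union> (\<lambda>i. (i, k)) ` {..<k}"
    by (auto simp: less_Suc_eq image_iff)
  have fin: "finite {p :: nat \<times> nat. fst p < snd p \<and> snd p < k}"
    by (rule finite_subset[of _ "{..<k} \<times> {..<k}"]) auto
  have "card {p :: nat \<times> nat. fst p < snd p \<and> snd p < Suc k} = k * (k - 1) div 2 + k"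
    unfolding eq using Suc fin by (subst card_Un_disjoint) (auto simp: card_image inj_on_def)
  also have "\<dots> = Suc k * (Suc k - 1) div 2"
    by (cases k) (auto simp: algebra_simps)
  finally show ?case .
qed

lemma finite_pairs: "finite {p :: nat \<times> nat. fst p < snd p \<and> snd p < k}"
  by (rule finite_subset[of _ "{..<k} \<times> {..<k}"]) auto

context lie begin

lemma span_Un_mono:
  assumes "A \<subseteq> FV.span B" shows "FV.span (C \<union> A) \<subseteq> FV.span (C \<union> B)"
proof (rule FV.span_minimal)
  have "A \<subseteq> FV.span (C \<union> B)" using assms FV.span_mono[of B "C \<union> B"] by blast
  moreover have "C \<subseteq> FV.span (C \<union> B)" using FV.span_superset[of "C \<union> B"] by blast
  ultimately show "C \<union> A \<subseteq> FV.span (C \<union> B)" by blast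
qed simp

lemma nil_central:
  assumes nil: "nilpotent_lie scale br" and N: "subspace N" and L: "\<not> L2 \<subseteq> N"
  shows "\<exists>z. z \<in> L2 \<and> z \<notin> N \<and> (\<forall>y. br y z \<in> N)"
proof -
  obtain k0 where k0: "lcs scale br k0 = {0}" using nil unfolding nilpotent_lie_def by blast
  have L2eq: "lcs scale br (Suc (Suc 0)) = L2" unfolding derived_def by simp
  have sub: "lcs scale br (Suc (Suc j)) \<subseteq> L2" for j
    unfolding derived_def lcs.simps by (rule span_mono) blast
  have "k0 \<ge> 2"
  proof (rule ccontr)
    assume "\<not> k0 \<ge> 2"
    then have "k0 = 0 \<or> k0 = Suc 0" by arith
    then have "lcs scale br k0 = UNIV" by auto
    then have "x \<in> lcs scale br k0" for x :: 'v by simp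
    then have "x = 0" for x :: 'v unfolding k0 by simp
    then have "L2 \<subseteq> N" using subspace_0[OF N] by (metis subsetI)
    then show False using L by simp
  qed
  then obtain j0 where j0: "k0 = Suc (Suc j0)" by (metis add_2_eq_Suc le_Suc_ex)
  define Q where "Q j \<longleftrightarrow> lcs scale br (Suc (Suc j)) \<subseteq> N" for j
  have Qj0: "Q j0" unfolding Q_def using k0 j0 N subspace_0 by auto
  define j where "j = (LEAST j. Q j)"
  have Qj: "Q j" unfolding j_def by (rule LeastI[of Q, OF Qj0])
  have j0': "j \<noteq> 0" using Qj L L2eq unfolding Q_def by auto
  then obtain i where i: "j = Suc i" by (cases j) auto
  have "\<not> Q i" using not_less_Least[of i Q] i unfolding j_def[symmetric] by simp
  then obtain z where z: "z \<in> lcs scale br (Suc (Suc i))" "z \<notin> N" unfolding Q_def by blast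
  have "br y z \<in> N" for y
  proof -
    have eq: "lcs scale br (Suc (Suc (Suc i))) = span {br x w | x w. w \<in> lcs scale br (Suc (Suc i))}"
      by (rule lcs.simps(3))
    have "br y z \<in> lcs scale br (Suc (Suc j))"
      unfolding i eq by (rule span_base) (use z in blast)
    then show ?thesis using Qj unfolding Q_def by blast
  qed
  then show ?thesis using z sub by blast
qed

lemma top_pairs:
  fixes f :: "nat \<Rightarrow> 'v" and k :: nat
  assumes X: "span (f ` {..<k} \<union> L2) = UNIV"
  shows "A2 \<subseteq> FV.span ((\<lambda>p. fa_mult (gen (f (fst p))) (gen (f (snd p)))) ` {p. fst p < snd p \<and> snd p < k} \<union> JN L2)"
proof -
  let ?T = "(\<lambda>p. fa_mult (gen (f (fst p))) (gen (f (snd p)))) ` {p. fst p < snd p \<and> snd p < k}"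
  let ?Sp = "FV.span (?T \<union> JN L2)"
  have Sp: "FV.subspace ?Sp" "JN L2 \<subseteq> ?Sp"
    using FV.span_superset[of "?T \<union> JN L2"] by auto
  have T: "?T \<subseteq> ?Sp" using FV.span_superset[of "?T \<union> JN L2"] by auto
  have pairs: "fa_mult (gen x) (gen y) \<in> ?Sp" if x: "x \<in> f ` {..<k} \<union> L2" and y: "y \<in> f ` {..<k} \<union> L2" for x y
  proof (cases "x \<in> L2 \<or> y \<in> L2")
    case True
    then show ?thesis
    proof
      assume "x \<in> L2"
      then have "fa_mult (gen x) (gen y) \<in> JN L2" by (intro mult_K_l gen_in_KN) auto
      then show ?thesis using Sp by auto
    next
      assume "y \<in> L2"
      then have "fa_mult (gen x) (gen y) \<in> JN L2" by (intro mult_K_r gen_in_KN) auto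
      then show ?thesis using Sp by auto
    qed
  next
    case False
    then obtain i j where ij: "x = f i" "y = f j" "i < k" "j < k" using x y by auto
    consider "i < j" | "i = j" | "j < i" using less_linear[of i j] by blast
    then show ?thesis
    proof cases
      case 1 then have "fa_mult (gen x) (gen y) \<in> ?T" using ij by (auto intro!: image_eqI[of _ _ "(i, j)"])
      then show ?thesis using T by auto
    next
      case 2 then have "fa_mult (gen x) (gen y) \<in> JN L2" using ij by (auto intro!: I_J lie_rel_ideal.alt)
      then show ?thesis using Sp by auto
    next
      case 3 then have "fa_mult (gen y) (gen x) \<in> ?T" using ij by (auto intro!: image_eqI[of _ _ "(j, i)"])
      then have 1: "fa_mult (gen y) (gen x) \<in> ?Sp" using T by auto
      have "fa_mult (gen x) (gen y) + fa_mult (gen y) (gen x) \<in> ?Sp" using anti_J[of "gen x" "gen y" L2] Sp by auto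
      then have "fa_mult (gen x) (gen y) + fa_mult (gen y) (gen x) - fa_mult (gen y) (gen x) \<in> ?Sp"
        using 1 Sp(1) by (intro FV.subspace_diff)
      then show ?thesis by simp
    qed
  qed
  have "fa_mult (gen x) (gen y) \<in> ?Sp" for x y
    by (rule gen_pairs_all[OF subspace_L2 Sp X pairs])
  then show ?thesis by (rule A2_sub_gen[OF subspace_L2 Sp])
qed

end

locale fdlie = lie scale br + finite_dimensional_vector_space scale Basis
  for scale :: "'f::field \<Rightarrow> 'v::ab_group_add \<Rightarrow> 'v" and br and Basis
begin

lemma chain_bound:
  fixes f :: "nat \<Rightarrow> 'v" and k :: nat
  assumes nil: "nilpotent_lie scale br" and X: "span (f ` {..<k} \<union> L2) = UNIV"
  shows "subspace N \<Longrightarrow> N \<subseteq> L2 \<Longrightarrow> (\<forall>x y. y \<in> N \<longrightarrow> br x y \<in> N) \<Longrightarrow> dim N + 1 + j = dim L2 \<Longrightarrow>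
    \<exists>T. finite T \<and> card T \<le> k * (k - 1) div 2 + 2 + j * k \<and> A2 \<subseteq> FV.span (T \<union> JN N)"
proof (induction j arbitrary: N)
  case 0
  note N = 0(1)
  have sN: "span N = N" using N by simp
  have nL: "\<not> L2 \<subseteq> N"
  proof
    assume "L2 \<subseteq> N" then have "dim L2 \<le> dim N" by (rule dim_subset)
    then show False using 0(4) by simp
  qed
  obtain a b where ab: "br a b \<notin> N"
  proof (rule ccontr)
    assume "\<not> thesis"
    then have "\<forall>a b. br a b \<in> N" using that by blast
    then have "L2 \<subseteq> N" using L2_sub[OF N] by blast
    then show False using nL by simp
  qed
  define z where "z = br a b"
  define N' where "N' = span (insert z N)"
  have "z \<notin> span N" unfolding sN z_def by (rule ab)
  then have dN': "dim N' = dim N + 1" unfolding N'_def dim_span dim_insert by simp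
  have N'L: "N' \<subseteq> L2" unfolding N'_def
    by (rule span_minimal) (use 0(2) br_L2 z_def subspace_L2 in auto)
  have N'eq: "N' = L2"
    by (rule subspace_dim_equal) (use N'L dN' 0(4) subspace_L2 N'_def in auto)
  let ?Ttop = "(\<lambda>p. fa_mult (gen (f (fst p))) (gen (f (snd p)))) ` {p. fst p < snd p \<and> snd p < k}"
  let ?Tf = "{fa_mult (gen (br a b)) (gen a), fa_mult (gen (br a b)) (gen b)}"
  have top: "A2 \<subseteq> FV.span (?Ttop \<union> JN N')" using top_pairs[OF X] N'eq by simp
  have fin: "JN N' \<subseteq> FV.span (?Tf \<union> JN N)"
    using step_final[OF N, of a b] N'eq unfolding N'_def z_def by simp
  have "A2 \<subseteq> FV.span (?Ttop \<union> (?Tf \<union> JN N))"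
    using top span_Un_mono[OF fin, of ?Ttop] by blast
  then have A: "A2 \<subseteq> FV.span ((?Ttop \<union> ?Tf) \<union> JN N)" by (simp add: Un_assoc)
  have c1: "card ?Ttop \<le> k * (k - 1) div 2"
    using card_image_le[OF finite_pairs, of _ k] card_pairs[of k] by metis
  have c2: "card ?Tf \<le> 2" by (simp add: card_insert_le_m1)
  have "card (?Ttop \<union> ?Tf) \<le> k * (k - 1) div 2 + 2"
    using order_trans[OF card_Un_le add_mono[OF c1 c2]] .
  moreover have "finite (?Ttop \<union> ?Tf)" using finite_pairs by auto
  ultimately show ?case using A by (intro exI[of _ "?Ttop \<union> ?Tf"]) auto
next
  case (Suc j)
  note N = Suc(2)
  have sN: "span N = N" using N by simp
  have nL: "\<not> L2 \<subseteq> N"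
  proof
    assume "L2 \<subseteq> N" then have "dim L2 \<le> dim N" by (rule dim_subset)
    then show False using Suc(5) by simp
  qed
  obtain z where z: "z \<in> L2" "z \<notin> N" "\<And>y. br y z \<in> N" using nil_central[OF nil N nL] by blast
  define N' where "N' = span (insert z N)"
  have NN': "N \<subseteq> N'" unfolding N'_def using span_superset[of "insert z N"] by blast
  have "z \<notin> span N" unfolding sN by (rule z(2))
  then have dN': "dim N' = dim N + 1" unfolding N'_def dim_span dim_insert by simp
  have N'L: "N' \<subseteq> L2" unfolding N'_def
    by (rule span_minimal) (use Suc(3) z subspace_L2 in auto)
  have sub': "subspace N'" unfolding N'_def by simp
  have ideal: "\<forall>x y. y \<in> N' \<longrightarrow> br x y \<in> N'"
  proof (intro allI impI)
    fix x y assume "y \<in> N'"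
    then obtain l where l: "y - scale l z \<in> N" unfolding N'_def span_breakdown_eq sN by blast
    have "br x y = br x (y - scale l z) + scale l (br x z)"
      by (simp add: br_diff_r br_scale_r)
    moreover have "br x (y - scale l z) \<in> N'" using Suc(4) l NN' by blast
    moreover have "br x z \<in> N'" using z(3)[of x] NN' by blast
    ultimately show "br x y \<in> N'" using sub' by (metis subspace_add subspace_scale)
  qed
  obtain T where T: "finite T" "card T \<le> k * (k - 1) div 2 + 2 + j * k" "A2 \<subseteq> FV.span (T \<union> JN N')"
    using Suc.IH[OF sub' N'L ideal] dN' Suc(5) by auto
  let ?Tz = "(\<lambda>x. fa_mult (gen z) (gen x)) ` f ` {..<k}"
  have st: "JN N' \<subseteq> FV.span (?Tz \<union> JN N)"
    unfolding N'_def by (rule step_central[OF N z(3) X])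
  have "A2 \<subseteq> FV.span (T \<union> (?Tz \<union> JN N))"
    using T(3) span_Un_mono[OF st, of T] by blast
  then have A: "A2 \<subseteq> FV.span ((T \<union> ?Tz) \<union> JN N)" by (simp add: Un_assoc)
  have cz: "card ?Tz \<le> k"
    using card_image_le[of "f ` {..<k}"] card_image_le[of "{..<k}" f] by (metis card_lessThan finite_imageI finite_lessThan le_trans)
  have "card (T \<union> ?Tz) \<le> k * (k - 1) div 2 + 2 + Suc j * k"
    using order_trans[OF card_Un_le add_mono[OF T(2) cz]] by (simp add: algebra_simps)
  moreover have "finite (T \<union> ?Tz)" using T(1) by auto
  ultimately show ?case using A by (intro exI[of _ "T \<union> ?Tz"]) auto
qed

end

context fdlie begin

lemma L2_image: "y \<in> L2 \<Longrightarrow> \<exists>p\<in>A2. ev p = y"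
proof -
  have A2s: "FV.subspace A2" unfolding A2_def by simp
  have "subspace {y. \<exists>p\<in>A2. ev p = y}"
    unfolding subspace_def
  proof (intro conjI allI impI ballI)
    have "ev 0 = 0" "(0::('v,'f) fa) \<in> A2" using FV.subspace_0[OF A2s] by auto
    then show "0 \<in> {y. \<exists>p\<in>A2. ev p = y}" by blast
  next
    fix x y assume "x \<in> {y. \<exists>p\<in>A2. ev p = y}" "y \<in> {y. \<exists>p\<in>A2. ev p = y}"
    then obtain p q where pq: "p \<in> A2" "q \<in> A2" "ev p = x" "ev q = y" by blast
    have "p \<in> FA" "q \<in> FA" using pq A2_FA by auto
    then have "p + q \<in> A2" "ev (p + q) = x + y"
      using FV.subspace_add[OF A2s] eval_add pq by auto
    then show "x + y \<in> {y. \<exists>p\<in>A2. ev p = y}" by blast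
  next
    fix c x assume "x \<in> {y. \<exists>p\<in>A2. ev p = y}"
    then obtain p where p: "p \<in> A2" "ev p = x" by blast
    have "p \<in> FA" using p A2_FA by auto
    then have "fa_scale c p \<in> A2" "ev (fa_scale c p) = scale c x"
      using FV.subspace_scale[OF A2s] eval_scale p by auto
    then show "scale c x \<in> {y. \<exists>p\<in>A2. ev p = y}" by blast
  qed
  moreover have "br x y \<in> {y. \<exists>p\<in>A2. ev p = y}" for x y
  proof -
    have "ev (fa_mult (gen x) (gen y)) = br x y" by (simp add: eval_mult)
    then show ?thesis using mult_A2[OF FA_gen FA_gen, of x y] by blast
  qed
  ultimately have "L2 \<subseteq> {y. \<exists>p\<in>A2. ev p = y}" by (rule L2_sub)
  then show "y \<in> L2 \<Longrightarrow> \<exists>p\<in>A2. ev p = y" by blast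
qed

lemma upper:
  assumes q: "quot_dim (KN {0} \<inter> A2) (JN {0}) d" and T: "finite T"
    and A: "A2 \<subseteq> FV.span (T \<union> JN {0})"
  shows "d + dim L2 \<le> card T"
proof -
  obtain S where S: "finite S" "card S = d" "S \<subseteq> KN {0} \<inter> A2" "indep_mod (JN {0}) S"
    using q[unfolded quot_dim_iff] by metis
  obtain B2 where B2: "B2 \<subseteq> L2" "independent B2" "L2 \<subseteq> span B2" "card B2 = dim L2"
    using basis_exists[of L2] by metis
  have fB2: "finite B2" using finiteI_independent[OF B2(2)] .
  have "\<forall>y\<in>B2. \<exists>p. p \<in> A2 \<and> ev p = y" using L2_image B2(1) by blast
  then obtain p where p: "\<And>y. y \<in> B2 \<Longrightarrow> p y \<in> A2" "\<And>y. y \<in> B2 \<Longrightarrow> ev (p y) = y" by metis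
  have injp: "inj_on p B2" by (rule inj_onI) (metis p(2))
  have z0: "0 \<notin> B2" using B2(2) dependent_zero by blast
  define P where "P = p ` B2"
  have SP: "S \<inter> P = {}"
  proof (rule ccontr)
    assume "S \<inter> P \<noteq> {}"
    then obtain y where y: "y \<in> B2" "p y \<in> S" unfolding P_def by blast
    then have "ev (p y) = 0" using S(3) by (auto simp: KN_def)
    then show False using p(2)[OF y(1)] z0 y(1) by simp
  qed
  define U where "U = S \<union> P"
  have fU: "finite U" unfolding U_def P_def using S(1) fB2 by simp
  have cU: "card U = d + dim L2"
    unfolding U_def using card_Un_disjoint[OF S(1) _ SP] fB2 card_image[OF injp] S(2) B2(4)
    unfolding P_def by simp
  have UA: "U \<subseteq> A2" unfolding U_def P_def using S(3) p(1) by auto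
  have UFA: "U \<subseteq> FA" using UA A2_FA by auto
  have ind: "indep_mod (JN {0}) U"
    unfolding indep_mod_def
  proof (intro allI impI)
    fix c assume c: "(\<Sum>u\<in>U. fa_scale (c u) u) \<in> JN {0}"
    have split: "(\<Sum>u\<in>U. fa_scale (c u) u) = (\<Sum>u\<in>S. fa_scale (c u) u) + (\<Sum>u\<in>P. fa_scale (c u) u)"
      unfolding U_def by (rule sum.union_disjoint) (use S(1) fB2 SP P_def in auto)
    have "ev (\<Sum>u\<in>U. fa_scale (c u) u) = (\<Sum>u\<in>U. scale (c u) (ev u))"
      using UFA by (subst eval_sum) (auto intro!: sum.cong eval_scale)
    also have "\<dots> = (\<Sum>u\<in>S. scale (c u) (ev u)) + (\<Sum>u\<in>P. scale (c u) (ev u))"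
      unfolding U_def by (rule sum.union_disjoint) (use S(1) fB2 SP P_def in auto)
    also have "(\<Sum>u\<in>S. scale (c u) (ev u)) = 0"
      using S(3) by (intro sum.neutral) (auto simp: KN_def)
    also have "(\<Sum>u\<in>P. scale (c u) (ev u)) = (\<Sum>y\<in>B2. scale (c (p y)) y)"
      unfolding P_def by (subst sum.reindex[OF injp]) (auto simp: p(2))
    finally have "(\<Sum>y\<in>B2. scale (c (p y)) y) = 0" using JN0_ev[OF c] by simp
    note sum0 = this
    have nodep: "\<not> (\<exists>u. (\<exists>v\<in>B2. u v \<noteq> 0) \<and> (\<Sum>v\<in>B2. scale (u v) v) = 0)"
      using B2(2) dependent_finite[OF fB2] by simp
    have cP: "\<forall>y\<in>B2. c (p y) = 0"
    proof (rule ccontr)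
      assume "\<not> (\<forall>y\<in>B2. c (p y) = 0)"
      then have "(\<exists>v\<in>B2. (\<lambda>y. c (p y)) v \<noteq> 0) \<and> (\<Sum>v\<in>B2. scale ((\<lambda>y. c (p y)) v) v) = 0"
        using sum0 by auto
      then have "\<exists>u. (\<exists>v\<in>B2. u v \<noteq> 0) \<and> (\<Sum>v\<in>B2. scale (u v) v) = 0" by (rule exI[where x="\<lambda>y. c (p y)"])
      then show False using nodep by simp
    qed
    have "(\<Sum>u\<in>P. fa_scale (c u) u) = 0"
      unfolding P_def using cP by (intro sum.neutral) auto
    then have "(\<Sum>u\<in>S. fa_scale (c u) u) \<in> JN {0}" using c split by simp
    then have "\<forall>u\<in>S. c u = 0" using S(4)[unfolded indep_mod_def, rule_format, of c] by simp
    then show "\<forall>u\<in>U. c u = 0" using cP unfolding U_def P_def by auto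
  qed
  have "card U \<le> card T"
    by (rule indep_mod_bound[OF JN_subspace T fU order.trans[OF UA A] ind])
  then show ?thesis using cU by simp
qed

lemma bound_i:
  assumes nil: "nilpotent_lie scale br" and m: "dim L2 \<ge> 1"
    and q: "quot_dim (KN {0} \<inter> A2) (JN {0}) d"
  defines "k \<equiv> dim (UNIV :: 'v set) - dim L2"
  shows "d + dim L2 \<le> k * (k - 1) div 2 + 2 + (dim L2 - 1) * k"
proof -
  obtain B2 where B2: "B2 \<subseteq> L2" "independent B2" "L2 \<subseteq> span B2" "card B2 = dim L2"
    using basis_exists[of L2] by metis
  define B where "B = extend_basis B2"
  have B: "B2 \<subseteq> B" "independent B" "span B = UNIV"
    unfolding B_def using extend_basis_superset independent_extend_basis span_extend_basis B2(2) by auto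
  have fB: "finite B" using finiteI_independent[OF B(2)] .
  have cB: "card B = dim (UNIV :: 'v set)" using basis_card_eq_dim[of B UNIV] B by auto
  define X where "X = B - B2"
  have fX: "finite X" using fB by (simp add: X_def)
  have cX: "card X = k" unfolding X_def k_def using card_Diff_subset[OF finite_subset[OF B(1) fB] B(1)] cB B2(4) by simp
  obtain f where f: "bij_betw f {0..<card X} X" using ex_bij_betw_nat_finite[OF fX] by blast
  have fX': "f ` {..<k} = X" using f cX by (simp add: bij_betw_def atLeast0LessThan)
  have "B \<subseteq> X \<union> L2" using B2(1) by (auto simp: X_def)
  then have "span B \<subseteq> span (X \<union> L2)" by (rule span_mono)
  then have sp: "span (f ` {..<k} \<union> L2) = UNIV" using B(3) fX' by auto
  obtain T where T: "finite T" "card T \<le> k * (k - 1) div 2 + 2 + (dim L2 - 1) * k"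
      "A2 \<subseteq> FV.span (T \<union> JN {0})"
    using chain_bound[OF nil sp, of "{0}" "dim L2 - 1"] m subspace_L2 by (auto simp: subspace_0)
  show ?thesis using upper[OF q T(1) T(3)] T(2) by simp
qed

end

definition lin_h :: "('x tm \<Rightarrow> 'f::field) \<Rightarrow> ('x,'f) fa \<Rightarrow> 'f" where
  "lin_h h c = (\<Sum>t\<in>supp c. c t * h t)"

lemma lin_h_sup: assumes "finite S" "supp c \<subseteq> S" shows "lin_h h c = (\<Sum>t\<in>S. c t * h t)"
  unfolding lin_h_def by (rule sum.mono_neutral_left) (use assms in \<open>auto simp: supp_def\<close>)

lemma lin_h_add: assumes "c \<in> FA" "d \<in> FA" shows "lin_h h (c + d) = lin_h h c + lin_h h d"
proof -
  let ?S = "supp c \<union> supp d"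
  have f: "finite ?S" using assms by (simp add: FA_iff)
  have "lin_h h (c + d) = (\<Sum>t\<in>?S. (c + d) t * h t)" by (rule lin_h_sup[OF f supp_add])
  also have "\<dots> = (\<Sum>t\<in>?S. c t * h t) + (\<Sum>t\<in>?S. d t * h t)"
    by (simp add: sum.distrib fapp algebra_simps)
  also have "\<dots> = lin_h h c + lin_h h d" using lin_h_sup[OF f, of c] lin_h_sup[OF f, of d] by auto
  finally show ?thesis .
qed

lemma lin_h_scale: assumes "c \<in> FA" shows "lin_h h (fa_scale a c) = a * lin_h h c"
proof -
  have f: "finite (supp c)" using assms by (simp add: FA_iff)
  have "lin_h h (fa_scale a c) = (\<Sum>t\<in>supp c. (a * c t) * h t)"
    using lin_h_sup[OF f supp_scale, of h a] by (simp add: fapp)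
  also have "\<dots> = a * lin_h h c" using lin_h_sup[OF f subset_refl, of h] by (simp add: sum_distrib_left algebra_simps)
  finally show ?thesis .
qed

lemma lin_h_0[simp]: "lin_h h 0 = 0" by (simp add: lin_h_def supp_def fapp)

lemma lin_h_diff: assumes "c \<in> FA" "d \<in> FA" shows "lin_h h (c - d) = lin_h h c - lin_h h d"
proof -
  have "lin_h h (c - d + d) = lin_h h (c - d) + lin_h h d" using assms by (intro lin_h_add) auto
  then show ?thesis by simp
qed

lemma lin_h_sum: "(\<And>i. i \<in> A \<Longrightarrow> g i \<in> FA) \<Longrightarrow> lin_h h (sum g A) = (\<Sum>i\<in>A. lin_h h (g i))"
proof (induction A rule: infinite_finite_induct)
  case (insert x F)
  have "lin_h h (sum g (insert x F)) = lin_h h (g x + sum g F)" by (simp only: sum.insert[OF insert(1,2)])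
  also have "\<dots> = lin_h h (g x) + lin_h h (sum g F)" using insert FA_sum[of F g] by (intro lin_h_add) auto
  finally show ?case using insert.IH insert.prems by (simp only: sum.insert[OF insert(1,2)]) simp
qed auto

lemma lin_h_mult:
  assumes "c \<in> FA" "d \<in> FA" and h: "\<And>s u. h (Br s u) = g1 s * g2 u"
  shows "lin_h h (fa_mult c d) = lin_h g1 c * lin_h g2 d"
proof -
  have fc: "finite (supp c)" and fd: "finite (supp d)" using assms by (auto simp: FA_iff)
  let ?P = "supp c \<times> supp d"
  have fP: "finite (brp ` ?P)" using fc fd by simp
  have "lin_h h (fa_mult c d) = (\<Sum>t\<in>brp ` ?P. fa_mult c d t * h t)"
    by (rule lin_h_sup[OF fP supp_mult])
  also have "\<dots> = (\<Sum>pr\<in>?P. fa_mult c d (brp pr) * h (brp pr))"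
    by (rule sum.reindex[unfolded comp_def]) (rule inj_on_subset[OF inj_brp], simp)
  also have "\<dots> = (\<Sum>s\<in>supp c. \<Sum>u\<in>supp d. (c s * g1 s) * (d u * g2 u))"
    by (simp add: sum.cartesian_product brp_def split_def h algebra_simps)
  also have "\<dots> = lin_h g1 c * lin_h g2 d"
    unfolding lin_h_def by (simp add: sum_product)
  finally show ?thesis .
qed

locale c2 = fdlie scale br Basis
  for scale :: "'f::field \<Rightarrow> 'v::ab_group_add \<Rightarrow> 'v" and br Basis +
  fixes z :: 'v and B :: "'v set" and f :: "nat \<Rightarrow> 'v" and k :: nat and cc :: "nat \<Rightarrow> nat \<Rightarrow> 'f"
    and p q :: nat
  assumes zc: "\<And>y. br y z = 0"
    and L2z: "L2 = span {z}"
    and Bind: "independent B" and Bspan: "span B = UNIV" and zB: "z \<in> B"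
    and fB: "f ` {..<k} = B - {z}" and finj: "inj_on f {..<k}"
    and cc: "\<And>i j. br (f i) (f j) = scale (cc i j) z"
    and pq: "p < q" "q < k" "cc p q \<noteq> 0"
begin

definition pi :: "nat \<Rightarrow> 'v \<Rightarrow> 'f" where "pi i v = representation B v (f i)"

lemma pi_add: "pi i (x + y) = pi i x + pi i y"
  unfolding pi_def using representation_add[OF Bind] Bspan by simp
lemma pi_scale: "pi i (scale a x) = a * pi i x"
  unfolding pi_def using representation_scale[OF Bind] Bspan by simp
lemma pi_0[simp]: "pi i 0 = 0"
  unfolding pi_def by (simp add: representation_zero)
lemma pi_sum: "pi i (sum g A) = (\<Sum>a\<in>A. pi i (g a))"
  by (induction A rule: infinite_finite_induct) (auto simp: pi_add)
lemma pi_f: assumes "i < k" "j < k" shows "pi i (f j) = (if i = j then 1 else 0)"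
proof -
  have "f j \<in> B" using fB assms by auto
  then have "pi i (f j) = (if f i = f j then 1 else 0)"
    unfolding pi_def using representation_basis[OF Bind] by simp
  also have "(f i = f j) = (i = j)" using finj assms by (auto simp: inj_on_def)
  finally show ?thesis .
qed
lemma pi_z: assumes "i < k" shows "pi i z = 0"
proof -
  have "f i \<noteq> z" using fB assms by auto
  then show ?thesis unfolding pi_def using representation_basis[OF Bind zB] by simp
qed
lemma pi_br: assumes "i < k" shows "pi i (br x y) = 0"
proof -
  have "br x y \<in> span {z}" using br_L2 L2z by simp
  then obtain c where "br x y = scale c z" by (auto simp: span_singleton)
  then show ?thesis using pi_z[OF assms] by (simp add: pi_scale)
qed

lemma lin_h_pi: assumes "c \<in> FA" shows "lin_h (\<lambda>t. pi a (eval_tm br t)) c = pi a (ev c)"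
  unfolding lin_h_def eval_fa_def supp_def by (simp add: pi_sum pi_scale)

definition hh :: "nat \<Rightarrow> nat \<Rightarrow> 'v tm \<Rightarrow> 'f" where
  "hh a b t = (case t of Gen _ \<Rightarrow> 0 | Br s u \<Rightarrow> pi a (eval_tm br s) * pi b (eval_tm br u))"

definition Psi :: "nat \<Rightarrow> nat \<Rightarrow> ('v,'f) fa \<Rightarrow> 'f" where
  "Psi a b c = lin_h (hh a b) c - lin_h (hh b a) c"

lemma Psi_add: "c \<in> FA \<Longrightarrow> d \<in> FA \<Longrightarrow> Psi a b (c + d) = Psi a b c + Psi a b d"
  unfolding Psi_def by (simp add: lin_h_add)
lemma Psi_scale: "c \<in> FA \<Longrightarrow> Psi a b (fa_scale r c) = r * Psi a b c"
  unfolding Psi_def by (simp add: lin_h_scale algebra_simps)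
lemma Psi_diff: "c \<in> FA \<Longrightarrow> d \<in> FA \<Longrightarrow> Psi a b (c - d) = Psi a b c - Psi a b d"
  unfolding Psi_def by (simp add: lin_h_diff)
lemma Psi_0[simp]: "Psi a b 0 = 0" unfolding Psi_def by simp
lemma Psi_sum: "(\<And>i. i \<in> A \<Longrightarrow> g i \<in> FA) \<Longrightarrow> Psi a b (sum g A) = (\<Sum>i\<in>A. Psi a b (g i))"
  unfolding Psi_def by (simp add: lin_h_sum sum_subtractf)

lemma Psi_mult: assumes "c \<in> FA" "d \<in> FA"
  shows "Psi a b (fa_mult c d) = pi a (ev c) * pi b (ev d) - pi b (ev c) * pi a (ev d)"
proof -
  have "lin_h (hh a b) (fa_mult c d) = lin_h (\<lambda>t. pi a (eval_tm br t)) c * lin_h (\<lambda>t. pi b (eval_tm br t)) d"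
    by (rule lin_h_mult[OF assms]) (simp add: hh_def)
  moreover have "lin_h (hh b a) (fa_mult c d) = lin_h (\<lambda>t. pi b (eval_tm br t)) c * lin_h (\<lambda>t. pi a (eval_tm br t)) d"
    by (rule lin_h_mult[OF assms]) (simp add: hh_def)
  ultimately show ?thesis unfolding Psi_def using lin_h_pi assms by simp
qed

lemma Psi_I: assumes "a < k" "b < k" shows "u \<in> lie_rel_ideal \<Longrightarrow> Psi a b u = 0"
proof (induction rule: lie_rel_ideal.induct)
  case (alt x) then show ?case by (simp add: Psi_mult)
next
  case (jac x y w)
  have "Psi a b (fa_mult x (fa_mult y w) + fa_mult y (fa_mult w x) + fa_mult w (fa_mult x y)) = 0"
    using jac assms by (simp add: Psi_add Psi_mult eval_mult pi_br)
  then show ?case unfolding fa_add_eq .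
next
  case (add u v)
  have "Psi a b (u + v) = 0" using add by (simp add: Psi_add I_FA)
  then show ?case unfolding fa_add_eq .
next
  case (smult u r) then show ?case by (simp add: Psi_scale I_FA)
next
  case (multl u x) then show ?case by (simp add: Psi_mult I_FA I_ev)
next
  case (multr u x) then show ?case by (simp add: Psi_mult I_FA I_ev)
qed (unfold fa_zero_eq, rule Psi_0)

lemma Psi_J: assumes "a < k" "b < k" "u \<in> JN {0}" shows "Psi a b u = 0"
proof -
  have "FV.subspace {c \<in> FA. Psi a b c = 0}"
    unfolding FV.subspace_def by (auto simp: Psi_add Psi_scale)
  moreover have "{fa_mult r x | r x. r \<in> KN {0} \<and> x \<in> FA} \<union> lie_rel_ideal \<subseteq> {c \<in> FA. Psi a b c = 0}"
    using Psi_I[OF assms(1,2)] by (auto simp: KN_def Psi_mult I_FA)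
  ultimately show ?thesis using assms(3) unfolding JN_def using FV.span_minimal by blast
qed

end

context c2 begin

definition Idx :: "(nat \<times> nat) set" where
  "Idx = {pr. fst pr < snd pr \<and> snd pr < k} - {(p, q)}"

definition uu :: "nat \<times> nat \<Rightarrow> ('v,'f) fa" where
  "uu pr = fa_mult (gen (f (fst pr))) (gen (f (snd pr))) -
     fa_scale (cc (fst pr) (snd pr) / cc p q) (fa_mult (gen (f p)) (gen (f q)))"

lemma uu_FA: "uu pr \<in> FA" unfolding uu_def by simp

lemma uu_A2: "uu pr \<in> A2"
  unfolding uu_def A2_def
  by (intro FV.span_diff FV.span_scale FV.span_base) (blast intro: FA_gen)+

lemma uu_ev: "ev (uu pr) = 0"
  using pq(3) unfolding uu_def by (simp add: eval_diff eval_scale eval_mult cc scale_scale)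

lemma Psi_uu:
  assumes ab: "(a, b) \<in> Idx" and ij: "(i, j) \<in> Idx"
  shows "Psi a b (uu (i, j)) = (if (i, j) = (a, b) then 1 else 0)"
proof -
  have a: "a < b" "b < k" "(a, b) \<noteq> (p, q)" and i: "i < j" "j < k" using ab ij by (auto simp: Idx_def)
  have 1: "pi a (f i) * pi b (f j) - pi b (f i) * pi a (f j) = (if (i, j) = (a, b) then 1 else 0)"
    using a i by (auto simp: pi_f)
  have 2: "pi a (f p) * pi b (f q) - pi b (f p) * pi a (f q) = 0"
    using a i pq by (auto simp: pi_f)
  show ?thesis unfolding uu_def
    by (simp add: Psi_diff Psi_scale Psi_mult 1 2)
qed

lemma inj_uu: "inj_on uu Idx"
proof (rule inj_onI)
  fix x y assume x: "x \<in> Idx" and y: "y \<in> Idx" and e: "uu x = uu y"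
  obtain a b where yab: "y = (a, b)" by (cases y)
  obtain i j where xij: "x = (i, j)" by (cases x)
  have "Psi a b (uu x) = Psi a b (uu y)" using e by simp
  then have "(if (i, j) = (a, b) then 1 else (0::'f)) = 1"
    using Psi_uu[of a b i j] Psi_uu[of a b a b] x y xij yab by simp
  then show "x = y" using xij yab by (simp split: if_splits)
qed

lemma card_Idx: "card Idx = k * (k - 1) div 2 - 1"
proof -
  have "(p, q) \<in> {pr. fst pr < snd pr \<and> snd pr < k}" using pq by simp
  then show ?thesis unfolding Idx_def using card_pairs[of k] finite_pairs[of k]
    by (simp add: card_Diff_singleton)
qed

lemma indep_uu: "indep_mod (JN {0}) (uu ` Idx)"
  unfolding indep_mod_def
proof (intro allI impI ballI)
  fix c w assume c: "(\<Sum>s\<in>uu ` Idx. fa_scale (c s) s) \<in> JN {0}" and w: "w \<in> uu ` Idx"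
  obtain a b where ab: "(a, b) \<in> Idx" "w = uu (a, b)" using w by auto
  have abk: "a < k" "b < k" using ab by (auto simp: Idx_def)
  have "0 = Psi a b (\<Sum>s\<in>uu ` Idx. fa_scale (c s) s)" using Psi_J[OF abk c] by simp
  also have "\<dots> = (\<Sum>s\<in>uu ` Idx. c s * Psi a b s)"
    by (subst Psi_sum) (auto simp: uu_FA intro!: sum.cong Psi_scale)
  also have "\<dots> = (\<Sum>x\<in>Idx. c (uu x) * Psi a b (uu x))"
    by (rule sum.reindex[OF inj_uu, unfolded comp_def])
  also have "\<dots> = (\<Sum>x\<in>Idx. if x = (a, b) then c (uu (a, b)) else 0)"
  proof (rule sum.cong[OF refl])
    fix x assume x: "x \<in> Idx"
    obtain i j where xij: "x = (i, j)" by (cases x)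
    show "c (uu x) * Psi a b (uu x) = (if x = (a, b) then c (uu (a, b)) else 0)"
      using Psi_uu[OF ab(1), of i j] x xij by auto
  qed
  also have "\<dots> = c (uu (a, b))" using ab(1) finite_pairs[of k] by (simp add: Idx_def)
  finally show "c w = 0" using ab by simp
qed

lemma lower:
  assumes q: "quot_dim (KN {0} \<inter> A2) (JN {0}) d"
  shows "k * (k - 1) div 2 - 1 \<le> d"
proof -
  have fin: "finite (uu ` Idx)" using finite_pairs[of k] by (simp add: Idx_def)
  have sub: "uu ` Idx \<subseteq> FV.span ((KN {0} \<inter> A2) \<union> JN {0})"
  proof
    fix w assume "w \<in> uu ` Idx"
    then have "w \<in> KN {0} \<inter> A2" using uu_A2 uu_FA uu_ev by (auto simp: KN_def)
    then show "w \<in> FV.span ((KN {0} \<inter> A2) \<union> JN {0})" by (intro FV.span_base) auto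
  qed
  have "card (uu ` Idx) \<le> d" by (rule quot_dim_le[OF JN_subspace q fin sub indep_uu])
  then show ?thesis using card_image[OF inj_uu] card_Idx by simp
qed

end

context fdlie begin

lemma bound_ii:
  assumes nil: "nilpotent_lie scale br" and nab: "\<not> abelian_lie br" and m: "dim L2 = 1"
    and qd: "quot_dim (KN {0} \<inter> A2) (JN {0}) d"
  shows "\<exists>k. k \<ge> 2 \<and> dim (UNIV :: 'v set) = k + 1 \<and> k * (k - 1) div 2 \<le> d + 1"
proof -
  obtain B2 where B2: "B2 \<subseteq> L2" "independent B2" "L2 \<subseteq> span B2" "card B2 = dim L2"
    using basis_exists[of L2] by metis
  have "card B2 = 1" using B2(4) m by simp
  then obtain z where zB2: "B2 = {z}" by (rule card_1_singletonE)
  have z0: "z \<noteq> 0" using B2(2) zB2 dependent_zero by blast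
  have zL: "z \<in> L2" using B2(1) zB2 by auto
  have L2z: "L2 = span {z}"
  proof
    show "L2 \<subseteq> span {z}" using B2(3) zB2 by simp
    show "span {z} \<subseteq> L2" using zL subspace_L2 by (intro span_minimal) auto
  qed
  have zc: "br y z = 0" for y
  proof (rule ccontr)
    assume ne: "br y z \<noteq> 0"
    have "br y z \<in> span {z}" using br_L2 L2z by simp
    then obtain mu where mu: "br y z = scale mu z" by (auto simp: span_singleton)
    have mu0: "mu \<noteq> 0" using ne mu by auto
    have zz: "br (scale (inverse mu) y) z = z" using mu mu0 by (simp add: br_scale_l scale_scale)
    have all: "z \<in> lcs scale br (Suc (Suc j))" for j
    proof (induction j)
      case 0 then show ?case using zL unfolding derived_def by simp
    next
      case (Suc j)
      have eq: "lcs scale br (Suc (Suc (Suc j))) = span {br x w | x w. w \<in> lcs scale br (Suc (Suc j))}"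
        by (rule lcs.simps(3))
      have "br (scale (inverse mu) y) z \<in> {br x w | x w. w \<in> lcs scale br (Suc (Suc j))}" using Suc by blast
      then have "z \<in> {br x w | x w. w \<in> lcs scale br (Suc (Suc j))}" by (simp only: zz)
      then show ?case unfolding eq by (rule span_base)
    qed
    obtain k0 where k0: "lcs scale br k0 = {0}" using nil unfolding nilpotent_lie_def by blast
    have "z \<in> lcs scale br k0"
    proof (cases "k0 \<ge> 2")
      case True then obtain j where "k0 = Suc (Suc j)" by (metis add_2_eq_Suc le_Suc_ex)
      then show ?thesis using all by simp
    next
      case False then have "k0 = 0 \<or> k0 = Suc 0" by arith
      then show ?thesis by auto
    qed
    then show False using k0 z0 by simp
  qed
  define B where "B = extend_basis {z}"
  have indz: "independent {z}" using B2(2) zB2 by simp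
  have B: "z \<in> B" "independent B" "span B = UNIV"
    unfolding B_def using extend_basis_superset[OF indz] independent_extend_basis[OF indz] span_extend_basis[OF indz] by auto
  have finB: "finite B" using finiteI_independent[OF B(2)] .
  have cB: "card B = dim (UNIV :: 'v set)" using basis_card_eq_dim[of B UNIV] B by auto
  define k where "k = card B - 1"
  have cX: "card (B - {z}) = k" unfolding k_def using B(1) finB by simp
  obtain f where f: "bij_betw f {0..<card (B - {z})} (B - {z})"
    using ex_bij_betw_nat_finite[of "B - {z}"] finB by blast
  have fim: "f ` {..<k} = B - {z}" and finj: "inj_on f {..<k}"
    using f cX by (auto simp: bij_betw_def atLeast0LessThan)
  define cc where "cc i j = (SOME c. br (f i) (f j) = scale c z)" for i j
  have cc: "br (f i) (f j) = scale (cc i j) z" for i j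
  proof -
    have "br (f i) (f j) \<in> span {z}" using br_L2 L2z by simp
    then have "\<exists>c. br (f i) (f j) = scale c z" by (auto simp: span_singleton)
    then show ?thesis unfolding cc_def by (rule someI_ex)
  qed
  have "\<exists>p q. p < q \<and> q < k \<and> cc p q \<noteq> 0"
  proof (rule ccontr)
    assume "\<not> ?thesis"
    then have c0: "p < q \<Longrightarrow> q < k \<Longrightarrow> br (f p) (f q) = 0" for p q using cc by auto
    have zc': "br z y = 0" for y using zc[of y] br_anti[of z y] by simp
    have pair: "br x y = 0" if x: "x \<in> B" and y: "y \<in> B" for x y
    proof (cases "x = z \<or> y = z")
      case True then show ?thesis using zc zc' by auto
    next
      case False
      then obtain i j where ij: "x = f i" "y = f j" "i < k" "j < k" using x y fim by blast
      consider "i < j" | "i = j" | "j < i" using less_linear[of i j] by blast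
      then show ?thesis
      proof cases
        case 1 then show ?thesis using c0 ij by simp
      next
        case 2 then show ?thesis using ij br_alt by simp
      next
        case 3 then show ?thesis using c0[of j i] ij br_anti[of x y] by simp
      qed
    qed
    have S1: "subspace {x. \<forall>y\<in>B. br x y = 0}"
      unfolding subspace_def by (auto simp: br_add_l br_scale_l)
    have U1: "{x. \<forall>y\<in>B. br x y = 0} = UNIV"
      by (rule span_UNIV_sub[OF B(3) S1]) (use pair in auto)
    have "br x y = 0" for x y
    proof -
      have S2: "subspace {y. br x y = 0}" unfolding subspace_def by (auto simp: br_add_r br_scale_r)
      have "{y. br x y = 0} = UNIV"
        by (rule span_UNIV_sub[OF B(3) S2]) (use U1 in auto)
      then show ?thesis by auto
    qed
    then show False using nab unfolding abelian_lie_def by simp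
  qed
  then obtain p q where pq: "p < q" "q < k" "cc p q \<noteq> 0" by blast
  interpret c2 scale br Basis z B f k cc p q
    apply unfold_locales
    apply (rule zc)
    apply (rule L2z)
    apply (rule B(2))
    apply (rule B(3))
    apply (rule B(1))
    apply (rule fim)
    apply (rule finj)
    apply (rule cc)
    apply (rule pq(1))
    apply (rule pq(2))
    apply (rule pq(3))
    done
  have "k * (k - 1) div 2 - 1 \<le> d" by (rule lower[OF qd])
  moreover have "k * (k - 1) div 2 \<ge> 1"
  proof -
    have "k \<ge> 2" using pq by simp
    then have "k * (k - 1) \<ge> 2 * 1" by (intro mult_mono) auto
    then show ?thesis by simp
  qed
  ultimately have "k * (k - 1) div 2 \<le> d + 1" by simp
  moreover have "B \<noteq> {}" using B(1) by blast
  then have "card B \<noteq> 0" using finB by simp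
  then have "dim (UNIV :: 'v set) = k + 1" using cB unfolding k_def by simp
  ultimately show ?thesis using pq by (intro exI[of _ k]) auto
qed

end

context lie begin

lemma schur_dim_eq:
  assumes W: "quot_dim (KN {0} \<inter> A2) (JN {0}) d"
  shows "schur_dim scale br = d"
proof -
  have pk: "pres_kernel scale br = KN {0}" by (auto simp: pres_kernel_def KN_def)
  have sq: "fa_sq = A2" by (simp add: fa_sq_def A2_def fa_span_eq)
  have J: "fa_span ({fa_mult r a | r a. r \<in> KN {0} \<and> a \<in> FA} \<union> lie_rel_ideal) = JN {0}"
    by (simp add: fa_span_eq JN_def)
  show ?thesis unfolding schur_dim_def pk sq J by (rule the_quot_dim[OF JN_subspace W])
qed

end

context fdlie begin

lemma qd_exists: "\<exists>d. quot_dim (KN {0} \<inter> A2) (JN {0}) d"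
proof -
  let ?T = "(\<lambda>pr. fa_mult (gen (fst pr)) (gen (snd pr))) ` (Basis \<times> Basis)"
  let ?Sp = "FV.span (?T \<union> JN {0})"
  have Sp: "FV.subspace ?Sp" "JN {0} \<subseteq> ?Sp" using FV.span_superset[of "?T \<union> JN {0}"] by auto
  have T: "?T \<subseteq> ?Sp" using FV.span_superset[of "?T \<union> JN {0}"] by auto
  have pairs: "fa_mult (gen x) (gen y) \<in> ?Sp" if "x \<in> Basis" "y \<in> Basis" for x y
  proof -
    have "fa_mult (gen x) (gen y) \<in> ?T" using that by (auto intro!: image_eqI[of _ _ "(x, y)"])
    then show ?thesis using T by blast
  qed
  have "fa_mult (gen x) (gen y) \<in> ?Sp" for x y
    by (rule gen_pairs_all[OF subspace_single_0 Sp span_Basis pairs])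
  then have A: "A2 \<subseteq> ?Sp" by (rule A2_sub_gen[OF subspace_single_0 Sp])
  have fT: "finite ?T" using finite_Basis by simp
  show ?thesis by (rule quot_dim_exists[OF JN_subspace fT]) (use A in blast)
qed

end

lemma even_kk: "even (k * (k - 1 :: nat))"
  by (cases "even k") (auto simp: odd_pos)

lemma even_int_kk: "even ((x::int) * (x - 1))"
  by (cases "even x") auto

lemma arith_ii:
  fixes k d :: nat assumes k: "k \<ge> 2" and h: "k * (k - 1) div 2 \<le> d + 1"
  shows "(int (k + 1) - 1) * (int (k + 1) - 2) div 2 + 1 - int d \<noteq> 5"
proof -
  obtain j where j: "k = Suc j" using k by (cases k) auto
  have e: "(int (k + 1) - 1) * (int (k + 1) - 2) = int (k * (k - 1))" unfolding j by (simp add: algebra_simps)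
  have "int (k * (k - 1) div 2) = int (k * (k - 1)) div 2" by (simp only: zdiv_int of_nat_numeral)
  then have "(int (k + 1) - 1) * (int (k + 1) - 2) div 2 = int (k * (k - 1) div 2)" unfolding e by simp
  then show ?thesis using h by linarith
qed

lemma arith_i:
  fixes k m d :: nat assumes m: "m \<ge> 4" and h: "d + m \<le> k * (k - 1) div 2 + 2 + (m - 1) * k"
  shows "(int (k + m) - 1) * (int (k + m) - 2) div 2 + 1 - int d \<noteq> 5"
proof -
  define K where "K = int k"
  define M where "M = int m"
  define P where "P = (K + M - 1) * (K + M - 2)"
  have KK: "2 * int (k * (k - 1) div 2) = K * (K - 1)"
  proof -
    have "2 * (k * (k - 1) div 2) = k * (k - 1)" using even_kk[of k] by simp
    then have "2 * int (k * (k - 1) div 2) = int (k * (k - 1))" by (metis of_nat_mult of_nat_numeral)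
    also have "\<dots> = K * (K - 1)" unfolding K_def by (cases k) (auto simp: algebra_simps)
    finally show ?thesis .
  qed
  have mk: "int ((m - 1) * k) = (M - 1) * K" using m unfolding K_def M_def by (simp add: of_nat_diff)
  have "int (d + m) \<le> int (k * (k - 1) div 2 + 2 + (m - 1) * k)" using h by (simp only: of_nat_le_iff)
  moreover have "int (d + m) = int d + M" unfolding M_def by simp
  moreover have "int (k * (k - 1) div 2 + 2 + (m - 1) * k) = int (k * (k - 1) div 2) + 2 + (M - 1) * K"
    using mk by simp
  ultimately have h': "int d + M \<le> int (k * (k - 1) div 2) + 2 + (M - 1) * K" by linarith
  have Pe: "2 * (P div 2) = P"
  proof -
    have "P = (K + M - 1) * ((K + M - 1) - 1)" unfolding P_def by (simp add: algebra_simps)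
    then have "even P" using even_int_kk[of "K + M - 1"] by simp
    then show ?thesis by simp
  qed
  have id: "P - K * (K - 1) - 2 * ((M - 1) * K) = (M - 1) * (M - 2)"
    unfolding P_def by (simp add: algebra_simps)
  have M4: "M \<ge> 4" using m unfolding M_def by simp
  have "(M - 1) * (M - 2) \<ge> 3 * 2" using M4 by (intro mult_mono) auto
  moreover define Q where "Q = P div 2"
  moreover define X where "X = int (k * (k - 1) div 2)"
  moreover define A where "A = (M - 1) * (M - 2)"
  moreover define C where "C = (M - 1) * K"
  moreover define E where "E = K * (K - 1)"
  ultimately have "2 * (Q + 1 - int d) \<ge> 12" using Pe KK h' id M4 by simp
  then have "2 * (P div 2 + 1 - int d) \<ge> 12" unfolding Q_def .
  moreover have "(int (k + m) - 1) * (int (k + m) - 2) = P" unfolding P_def K_def M_def by simp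
  ultimately show ?thesis by auto
qed

theorem lemma2p1:
  fixes scale :: "'f::field \<Rightarrow> 'v::ab_group_add \<Rightarrow> 'v"
    and br :: "'v \<Rightarrow> 'v \<Rightarrow> 'v"
  assumes "alg_closed_field TYPE('f)"
    and "(2::'f) \<noteq> 0"
  shows "\<not> (lie_algebra scale br \<and> finite_dim scale \<and> nilpotent_lie scale br \<and>
             \<not> abelian_lie br \<and> s_inv scale br = 5 \<and>
             (vector_space.dim scale (derived scale br) \<ge> 4 \<or>
              vector_space.dim scale (derived scale br) = 1))"
proof
  assume H: "lie_algebra scale br \<and> finite_dim scale \<and> nilpotent_lie scale br \<and>
             \<not> abelian_lie br \<and> s_inv scale br = 5 \<and>
             (vector_space.dim scale (derived scale br) \<ge> 4 \<or>
              vector_space.dim scale (derived scale br) = 1)"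
  interpret lie scale br using H lie_algebra_lie by blast
  obtain B0 where B0: "finite B0" "span B0 = UNIV" using H unfolding finite_dim_def by blast
  obtain Bs where Bs: "Bs \<subseteq> B0" "independent Bs" "B0 \<subseteq> span Bs"
    using maximal_independent_subset[of B0] by blast
  have fBs: "finite Bs" using B0(1) Bs(1) finite_subset by blast
  have sBs: "span Bs = UNIV" using B0(2) Bs(3) span_minimal[of B0 "span Bs"] by auto
  interpret fdlie scale br Bs by unfold_locales (use fBs Bs sBs in auto)
  obtain d where qd: "quot_dim (KN {0} \<inter> A2) (JN {0}) d" using qd_exists by blast
  have sd: "schur_dim scale br = d" by (rule schur_dim_eq[OF qd])
  define n where "n = dim (UNIV :: 'v set)"
  define m where "m = dim L2"
  have s5: "(int n - 1) * (int n - 2) div 2 + 1 - int d = 5"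
    using H sd unfolding s_inv_def Let_def n_def by simp
  have nil: "nilpotent_lie scale br" and nab: "\<not> abelian_lie br" using H by auto
  have "m \<ge> 4 \<or> m = 1" using H unfolding m_def by auto
  then show False
  proof
    assume m4: "m \<ge> 4"
    have mn: "m \<le> n" unfolding m_def n_def by (rule dim_subset) simp
    have "d + m \<le> (n - m) * (n - m - 1) div 2 + 2 + (m - 1) * (n - m)"
      using bound_i[OF nil _ qd] m4 unfolding m_def n_def by simp
    from arith_i[OF m4 this] mn s5 show False by simp
  next
    assume m1: "m = 1"
    obtain k where k: "k \<ge> 2" "n = k + 1" "k * (k - 1) div 2 \<le> d + 1"
      using bound_ii[OF nil nab _ qd] m1 unfolding m_def n_def by blast
    from arith_ii[OF k(1) k(3)] k(2) s5 show False by simp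
  qed
qed

end
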